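(* Let $(X,d)$ and $(Y,d')$ be proper metric spaces and $\pi:(Y,\varepsilon_{d'})\to(X,\varepsilon_d)$ a continuous coarse equivalence with a continuous quasi-inverse $\varpi$. If $X+_fW$ is a compactification with the coarse Karlsson property, then $Y+_{f^\ast}W$ has the coarse Karlsson property, where $f^\ast(A)=\mathrm{Cl}_W\big(f(\mathrm{Cl}_X(\pi(A)))\big)$ for $A$ closed in $Y$.
   Context: For an admissible map $f$ (from closed sets of $X$ to closed sets of $W$, sending $\emptyset$ to $\emptyset$ and preserving finite unions), $X+_fW$ is $X\sqcup W$ with closed sets the $D$ with $D\cap X$ closed in $X$, $D\cap W$ closed in $W$, $f(D\cap X)\subseteq D$; a compactification means it is compact Hausdorff with $X$ dense. $\varepsilon_d$ is the bounded coarse structure of $d$; coarse maps, closeness and quasi-inverses are in the sense of Roe. $\mathfrak{U}_f$ is the unique uniformity of $X+_fW$; $S$ is $u$-small if $S\times S\subseteq u$. A coarse arc between $x,y$ is a coarse embedding $\lambda:[0,t]\to X$ with $\lambda(0)=x,\lambda(t)=y$. A set $\Upsilon$ of coarse arcs is equicoarse if (1) for every $r>0$ there is $s>0$ with $d(\lambda(a),\lambda(b))<s$ whenever $\lambda\in\Upsilon$, $|a-b|<r$; (2) for every $r>0$ there is $s>0$ with $|a-b|<s$ whenever $\lambda\in\Upsilon$, $d(\lambda(a),\lambda(b))<r$. A compactification $X+_fW$ has the coarse Karlsson property if there is an equicoarse $\Upsilon$ containing an arc between any two points of $X$ such that for every $u\in\mathfrak{U}_f$ there is a bounded $S\subseteq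 X$ with every arc in $\Upsilon$ whose image misses $S$ having $u$-small image. *)

theory Defs
  imports "HOL-Analysis.Analysis"
begin

definition proper_metric_space :: "'a set \<Rightarrow> ('a \<Rightarrow> 'a \<Rightarrow> real) \<Rightarrow> bool" where
  "proper_metric_space M d \<longleftrightarrow> Metric_space M d \<and>
     (\<forall>x\<in>M. \<forall>r. compactin (Metric_space.mtopology M d) (Metric_space.mcball M d x r))"

definition bounded_coarse :: "'a set \<Rightarrow> ('a \<Rightarrow> 'a \<Rightarrow> real) \<Rightarrow> ('a \<times> 'a) set set" where
  "bounded_coarse M d = {E. E \<subseteq> M \<times> M \<and> (\<exists>r. \<forall>(a,b)\<in>E. d a b \<le> r)}"

definition coarse_bounded :: "('a \<times> 'a) set set \<Rightarrow> 'a set \<Rightarrow> bool" where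
  "coarse_bounded \<E> B \<longleftrightarrow> B \<times> B \<in> \<E>"

definition coarse_map ::
  "'a set \<Rightarrow> ('a \<times> 'a) set set \<Rightarrow> 'b set \<Rightarrow> ('b \<times> 'b) set set \<Rightarrow> ('a \<Rightarrow> 'b) \<Rightarrow> bool" where
  "coarse_map MA EA MB EB g \<longleftrightarrow> g ` MA \<subseteq> MB \<and>
     (\<forall>B. B \<subseteq> MB \<longrightarrow> coarse_bounded EB B \<longrightarrow> coarse_bounded EA {a\<in>MA. g a \<in> B}) \<and>
     (\<forall>E\<in>EA. (\<lambda>(a,a'). (g a, g a')) ` E \<in> EB)"

definition close_maps :: "'a set \<Rightarrow> ('b \<times> 'b) set set \<Rightarrow> ('a \<Rightarrow> 'b) \<Rightarrow> ('a \<Rightarrow> 'b) \<Rightarrow> bool" where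
  "close_maps MA EB g h \<longleftrightarrow> (\<lambda>a. (g a, h a)) ` MA \<in> EB"

definition coarse_quasi_inverse ::
  "'a set \<Rightarrow> ('a \<times> 'a) set set \<Rightarrow> 'b set \<Rightarrow> ('b \<times> 'b) set set \<Rightarrow> ('a \<Rightarrow> 'b) \<Rightarrow> ('b \<Rightarrow> 'a) \<Rightarrow> bool" where
  "coarse_quasi_inverse MA EA MB EB g h \<longleftrightarrow>
     coarse_map MB EB MA EA h \<and> close_maps MB EB (g \<circ> h) id \<and> close_maps MA EA (h \<circ> g) id"

definition admissible_map :: "'x topology \<Rightarrow> 'w topology \<Rightarrow> ('x set \<Rightarrow> 'w set) \<Rightarrow> bool" where
  "admissible_map X W f \<longleftrightarrow>
     (\<forall>A. closedin X A \<longrightarrow> closedin W (f A)) \<and> f {} = {} \<and>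
     (\<forall>A B. closedin X A \<longrightarrow> closedin X B \<longrightarrow> f (A \<union> B) = f A \<union> f B)"

text \<open>X +_f W as a topology on the disjoint union (Inl = X-part, Inr = W-part), given by its closed sets.\<close>
definition plus_topology :: "'x topology \<Rightarrow> 'w topology \<Rightarrow> ('x set \<Rightarrow> 'w set) \<Rightarrow> ('x + 'w) topology" where
  "plus_topology X W f = topology (\<lambda>U. U \<subseteq> Inl ` topspace X \<union> Inr ` topspace W \<and>
     (let D = (Inl ` topspace X \<union> Inr ` topspace W) - U in
        closedin X (Inl -` D) \<and> closedin W (Inr -` D) \<and> Inr ` f (Inl -` D) \<subseteq> D))"

definition is_compactification :: "'x topology \<Rightarrow> 'w topology \<Rightarrow> ('x set \<Rightarrow> 'w set) \<Rightarrow> bool" where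
  "is_compactification X W f \<longleftrightarrow> admissible_map X W f \<and>
     compact_space (plus_topology X W f) \<and> Hausdorff_space (plus_topology X W f) \<and>
     (plus_topology X W f) closure_of (Inl ` topspace X) = topspace (plus_topology X W f)"

text \<open>The unique uniformity of a compact Hausdorff space: the neighbourhoods of the diagonal.\<close>
definition compact_uniformity :: "'a topology \<Rightarrow> ('a \<times> 'a) set set" where
  "compact_uniformity T = {u. u \<subseteq> topspace T \<times> topspace T \<and>
     (\<exists>U. openin (prod_topology T T) U \<and> {(z,z) | z. z \<in> topspace T} \<subseteq> U \<and> U \<subseteq> u)}"

definition small_for :: "('a \<times> 'a) set \<Rightarrow> 'a set \<Rightarrow> bool" where
  "small_for u S \<longleftrightarrow> S \<times> S \<subseteq> u"

definition coarse_embedding_interval :: "'a set \<Rightarrow> ('a \<Rightarrow> 'a \<Rightarrow> real) \<Rightarrow> real \<Rightarrow> (real \<Rightarrow> 'a) \<Rightarrow> bool" where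
  "coarse_embedding_interval M d t l \<longleftrightarrow> 0 \<le> t \<and> l ` {0..t} \<subseteq> M \<and>
     (\<forall>r>0. \<exists>s>0. \<forall>a\<in>{0..t}. \<forall>b\<in>{0..t}. \<bar>a - b\<bar> < r \<longrightarrow> d (l a) (l b) < s) \<and>
     (\<forall>r>0. \<exists>s>0. \<forall>a\<in>{0..t}. \<forall>b\<in>{0..t}. d (l a) (l b) < r \<longrightarrow> \<bar>a - b\<bar> < s)"

definition coarse_arc :: "'a set \<Rightarrow> ('a \<Rightarrow> 'a \<Rightarrow> real) \<Rightarrow> 'a \<Rightarrow> 'a \<Rightarrow> real \<times> (real \<Rightarrow> 'a) \<Rightarrow> bool" where
  "coarse_arc M d x y ar \<longleftrightarrow> coarse_embedding_interval M d (fst ar) (snd ar) \<and>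
     snd ar 0 = x \<and> snd ar (fst ar) = y"

definition equicoarse :: "('a \<Rightarrow> 'a \<Rightarrow> real) \<Rightarrow> (real \<times> (real \<Rightarrow> 'a)) set \<Rightarrow> bool" where
  "equicoarse d \<Upsilon> \<longleftrightarrow>
     (\<forall>r>0. \<exists>s>0. \<forall>(t,l)\<in>\<Upsilon>. \<forall>a\<in>{0..t}. \<forall>b\<in>{0..t}. \<bar>a - b\<bar> < r \<longrightarrow> d (l a) (l b) < s) \<and>
     (\<forall>r>0. \<exists>s>0. \<forall>(t,l)\<in>\<Upsilon>. \<forall>a\<in>{0..t}. \<forall>b\<in>{0..t}. d (l a) (l b) < r \<longrightarrow> \<bar>a - b\<bar> < s)"

definition coarse_karlsson ::
  "'x set \<Rightarrow> ('x \<Rightarrow> 'x \<Rightarrow> real) \<Rightarrow> 'w topology \<Rightarrow> ('x set \<Rightarrow> 'w set) \<Rightarrow> bool" where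
  "coarse_karlsson M d W f \<longleftrightarrow>
     (let X = Metric_space.mtopology M d in
      is_compactification X W f \<and>
      (\<exists>\<Upsilon>. equicoarse d \<Upsilon> \<and>
         (\<forall>x\<in>M. \<forall>y\<in>M. \<exists>ar\<in>\<Upsilon>. coarse_arc M d x y ar) \<and>
         (\<forall>ar\<in>\<Upsilon>. \<exists>x y. coarse_arc M d x y ar) \<and>
         (\<forall>u\<in>compact_uniformity (plus_topology X W f).
            \<exists>S. S \<subseteq> M \<and> Metric_space.mbounded M d S \<and>
              (\<forall>(t,l)\<in>\<Upsilon>. l ` {0..t} \<inter> S = {} \<longrightarrow> small_for u (Inl ` l ` {0..t})))))"

definition pull_admissible ::
  "'x topology \<Rightarrow> 'w topology \<Rightarrow> ('x set \<Rightarrow> 'w set) \<Rightarrow> ('y \<Rightarrow> 'x) \<Rightarrow> 'y set \<Rightarrow> 'w set" where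
  "pull_admissible X W f \<pi> A = W closure_of (f (X closure_of (\<pi> ` A)))"

end

theory Submission
  imports Defs
begin

lemma adm_mono:
  assumes "admissible_map X W f" "closedin X A" "closedin X B" "A \<subseteq> B"
  shows "f A \<subseteq> f B"
proof -
  have "f B = f (A \<union> B)" using assms(4) by (simp add: Un_absorb1)
  also have "\<dots> = f A \<union> f B" using assms unfolding admissible_map_def by blast
  finally show ?thesis by blast
qed

definition plusT where "plusT X W = Inl ` topspace X \<union> Inr ` topspace W"

definition plusP where "plusP X W f U \<longleftrightarrow> U \<subseteq> plusT X W \<and> openin X (Inl -` U) \<and> openin W (Inr -` U) \<and>
   (\<forall>w\<in>f (topspace X - Inl -` U). Inr w \<notin> U)"

lemma plus_eq:
  assumes "admissible_map X W f"
  shows "plus_topology X W f = topology (plusP X W f)"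
proof -
  have "(\<lambda>U. U \<subseteq> Inl ` topspace X \<union> Inr ` topspace W \<and>
     (let D = (Inl ` topspace X \<union> Inr ` topspace W) - U in
        closedin X (Inl -` D) \<and> closedin W (Inr -` D) \<and> Inr ` f (Inl -` D) \<subseteq> D)) = plusP X W f"
  proof (rule ext)
    fix U
    show "(U \<subseteq> Inl ` topspace X \<union> Inr ` topspace W \<and>
     (let D = (Inl ` topspace X \<union> Inr ` topspace W) - U in
        closedin X (Inl -` D) \<and> closedin W (Inr -` D) \<and> Inr ` f (Inl -` D) \<subseteq> D)) = plusP X W f U"
    proof (cases "U \<subseteq> Inl ` topspace X \<union> Inr ` topspace W")
      case True
      have e1: "Inl -` ((Inl ` topspace X \<union> Inr ` topspace W) - U) = topspace X - Inl -` U" by auto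
      have e2: "Inr -` ((Inl ` topspace X \<union> Inr ` topspace W) - U) = topspace W - Inr -` U" by auto
      have s1: "Inl -` U \<subseteq> topspace X" "Inr -` U \<subseteq> topspace W" using True by auto
      have c1: "closedin X (topspace X - Inl -` U) = openin X (Inl -` U)"
        using s1 by (metis Diff_Diff_Int closedin_def inf.absorb_iff2 openin_closedin_eq) 
      have c2: "closedin W (topspace W - Inr -` U) = openin W (Inr -` U)"
        using s1 by (metis Diff_Diff_Int closedin_def inf.absorb_iff2 openin_closedin_eq) 
      have c3: "closedin X (topspace X - Inl -` U) \<Longrightarrow> f (topspace X - Inl -` U) \<subseteq> topspace W"
        using assms unfolding admissible_map_def by (meson closedin_subset)
      show ?thesis unfolding Let_def e1 e2 c1 c2 plusP_def plusT_def
        using True c3 c1 apply (auto simp: image_subset_iff)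
        by (meson image_eqI subsetD)
    next
      case False
      then show ?thesis by (simp add: plusP_def plusT_def)
    qed
  qed
  then show ?thesis unfolding plus_topology_def by simp
qed

lemma plusP_istop:
  assumes "admissible_map X W f"
  shows "istopology (plusP X W f)"
  unfolding istopology_def
proof (intro conjI allI impI)
  fix S T assume S: "plusP X W f S" and T: "plusP X W f T"
  have e: "topspace X - Inl -` (S \<inter> T) = (topspace X - Inl -` S) \<union> (topspace X - Inl -` T)" by auto
  have cS: "closedin X (topspace X - Inl -` S)" "closedin X (topspace X - Inl -` T)"
    using S T unfolding plusP_def by auto
  have "f (topspace X - Inl -` (S \<inter> T)) = f (topspace X - Inl -` S) \<union> f (topspace X - Inl -` T)"
    unfolding e using assms cS unfolding admissible_map_def by blast
  then show "plusP X W f (S \<inter> T)" using S T unfolding plusP_def by (auto simp: vimage_Int)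
next
  fix K assume K: "\<forall>S\<in>K. plusP X W f S"
  have o1: "openin X (Inl -` \<Union>K)"
  proof -
    have "Inl -` \<Union>K = \<Union>((\<lambda>S. Inl -` S) ` K)" by auto
    then show ?thesis using K unfolding plusP_def by auto
  qed
  have o2: "openin W (Inr -` \<Union>K)"
  proof -
    have "Inr -` \<Union>K = \<Union>((\<lambda>S. Inr -` S) ` K)" by auto
    then show ?thesis using K unfolding plusP_def by auto
  qed
  have "\<forall>w\<in>f (topspace X - Inl -` \<Union>K). Inr w \<notin> \<Union>K"
  proof (intro ballI notI)
    fix w assume w: "w \<in> f (topspace X - Inl -` \<Union>K)" and "Inr w \<in> \<Union>K"
    then obtain S where S: "S \<in> K" "Inr w \<in> S" by auto
    have "f (topspace X - Inl -` \<Union>K) \<subseteq> f (topspace X - Inl -` S)"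
      apply (rule adm_mono[OF assms])
      using o1 S K unfolding plusP_def by auto
    then show False using w S K unfolding plusP_def by auto
  qed
  then show "plusP X W f (\<Union>K)" using K o1 o2 unfolding plusP_def by auto
qed

lemma plus_openin:
  assumes "admissible_map X W f"
  shows "openin (plus_topology X W f) U \<longleftrightarrow> plusP X W f U"
  using plus_eq[OF assms] plusP_istop[OF assms] by simp

lemma plus_topspace:
  assumes "admissible_map X W f"
  shows "topspace (plus_topology X W f) = plusT X W"
proof -
  have e1: "Inl -` plusT X W = topspace X" "Inr -` plusT X W = topspace W" unfolding plusT_def by auto
  have "plusP X W f (plusT X W)" using assms unfolding plusP_def e1 admissible_map_def by auto
  then have "plusT X W \<subseteq> topspace (plus_topology X W f)"
    using plus_openin[OF assms] openin_subset by metis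
  moreover have "topspace (plus_topology X W f) \<subseteq> plusT X W"
    using plus_openin[OF assms] unfolding plusP_def
    by (metis openin_topspace)
  ultimately show ?thesis by blast
qed

lemma plus_closedin:
  assumes "admissible_map X W f"
  shows "closedin (plus_topology X W f) D \<longleftrightarrow> D \<subseteq> plusT X W \<and> closedin X (Inl -` D) \<and> closedin W (Inr -` D)
     \<and> Inr ` f (Inl -` D) \<subseteq> D"
proof -
  have "closedin (plus_topology X W f) D \<longleftrightarrow> D \<subseteq> plusT X W \<and> plusP X W f (plusT X W - D)"
    unfolding closedin_def plus_topspace[OF assms] plus_openin[OF assms] by simp
  also have "\<dots> \<longleftrightarrow> D \<subseteq> plusT X W \<and> closedin X (Inl -` D) \<and> closedin W (Inr -` D)
     \<and> Inr ` f (Inl -` D) \<subseteq> D"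
  proof (cases "D \<subseteq> plusT X W")
    case True
    have e1: "topspace X - Inl -` (plusT X W - D) = Inl -` D" using True unfolding plusT_def by auto
    have e2: "Inl -` (plusT X W - D) = topspace X - Inl -` D" using True unfolding plusT_def by auto
    have e3: "Inr -` (plusT X W - D) = topspace W - Inr -` D" using True unfolding plusT_def by auto
    have s: "Inl -` D \<subseteq> topspace X" "Inr -` D \<subseteq> topspace W" using True unfolding plusT_def by auto
    have c3: "closedin X (Inl -` D) \<Longrightarrow> f (Inl -` D) \<subseteq> topspace W"
        using assms unfolding admissible_map_def by (meson closedin_subset)
    show ?thesis unfolding plusP_def e1 e2 e3 using True s c3
      apply (simp add: openin_diff closedin_def)
      unfolding plusT_def apply (auto simp: Diff_Diff_Int inf.absorb2)
      by (meson image_eqI subsetD)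
  next
    case False then show ?thesis by simp
  qed
  finally show ?thesis .
qed

lemma (in Metric_space) cb_iff:
  assumes "B \<subseteq> M"
  shows "coarse_bounded (bounded_coarse M d) B \<longleftrightarrow> mbounded B"
proof
  assume "coarse_bounded (bounded_coarse M d) B"
  then obtain r where r: "\<forall>a\<in>B. \<forall>b\<in>B. d a b \<le> r"
    unfolding coarse_bounded_def bounded_coarse_def by auto
  show "mbounded B"
  proof (cases "B = {}")
    case True then show ?thesis by simp
  next
    case False
    then obtain c where c: "c \<in> B" by auto
    have "B \<subseteq> mcball c r" using r c assms unfolding mcball_def by auto
    then show ?thesis unfolding mbounded_def by auto
  qed
next
  assume "mbounded B"
  then obtain c r where cr: "B \<subseteq> mcball c r" unfolding mbounded_def by auto
  have "\<forall>(a,b)\<in>B\<times>B. d a b \<le> 2*r"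
  proof clarify
    fix a b assume "a \<in> B" "b \<in> B"
    then have "c \<in> M" "a \<in> M" "b \<in> M" "d c a \<le> r" "d c b \<le> r" using cr unfolding mcball_def by auto
    then show "d a b \<le> 2*r" using triangle[of a c b] commute[of a c] by linarith
  qed
  then show "coarse_bounded (bounded_coarse M d) B"
    unfolding coarse_bounded_def bounded_coarse_def using assms by blast
qed

locale KS = X: Metric_space MX dX + Y: Metric_space MY dY
  for MX :: "'x set" and dX and MY :: "'y set" and dY +
  fixes W :: "'w topology" and f :: "'x set \<Rightarrow> 'w set" and \<pi> :: "'y \<Rightarrow> 'x" and \<rho> :: "'x \<Rightarrow> 'y"
  assumes propX: "\<forall>x\<in>MX. \<forall>r. compactin X.mtopology (X.mcball x r)"
    and propY: "\<forall>x\<in>MY. \<forall>r. compactin Y.mtopology (Y.mcball x r)"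
    and contpi: "continuous_map Y.mtopology X.mtopology \<pi>"
    and contrho: "continuous_map X.mtopology Y.mtopology \<rho>"
    and cmpi: "coarse_map MY (bounded_coarse MY dY) MX (bounded_coarse MX dX) \<pi>"
    and qi: "coarse_quasi_inverse MY (bounded_coarse MY dY) MX (bounded_coarse MX dX) \<pi> \<rho>"
    and kar: "coarse_karlsson MX dX W f"
begin

abbreviation "TX \<equiv> X.mtopology"
abbreviation "TY \<equiv> Y.mtopology"
abbreviation "Z \<equiv> plus_topology TX W f"
abbreviation "fs \<equiv> pull_admissible TX W f \<pi>"
abbreviation "Z' \<equiv> plus_topology TY W fs"

lemma compZ: "is_compactification TX W f"
  using kar unfolding coarse_karlsson_def Let_def by blast

lemma admf: "admissible_map TX W f" using compZ is_compactification_def by blast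
lemma cZ: "compact_space Z" using compZ is_compactification_def by blast
lemma hZ: "Hausdorff_space Z" using compZ is_compactification_def by blast
lemma dZ: "Z closure_of (Inl ` MX) = topspace Z" using compZ X.topspace_mtopology unfolding is_compactification_def by metis

lemma exUps: "\<exists>\<Upsilon>. equicoarse dX \<Upsilon> \<and>
         (\<forall>x\<in>MX. \<forall>y\<in>MX. \<exists>ar\<in>\<Upsilon>. coarse_arc MX dX x y ar) \<and>
         (\<forall>ar\<in>\<Upsilon>. \<exists>x y. coarse_arc MX dX x y ar) \<and>
         (\<forall>u\<in>compact_uniformity Z.
            \<exists>S. S \<subseteq> MX \<and> X.mbounded S \<and>
              (\<forall>(t,l)\<in>\<Upsilon>. l ` {0..t} \<inter> S = {} \<longrightarrow> small_for u (Inl ` l ` {0..t})))"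
  using kar unfolding coarse_karlsson_def Let_def by blast

lemma pi_in: "y \<in> MY \<Longrightarrow> \<pi> y \<in> MX" using cmpi unfolding coarse_map_def by blast
lemma rho_in: "x \<in> MX \<Longrightarrow> \<rho> x \<in> MY" using qi unfolding coarse_quasi_inverse_def coarse_map_def by blast

lemma KX_ex: "\<exists>K. \<forall>x\<in>MX. dX (\<pi> (\<rho> x)) x \<le> K"
proof -
  have "(\<lambda>a. ((\<pi> \<circ> \<rho>) a, id a)) ` MX \<in> bounded_coarse MX dX"
    using qi unfolding coarse_quasi_inverse_def close_maps_def by blast
  then show ?thesis unfolding bounded_coarse_def by auto
qed

lemma KY_ex: "\<exists>K. \<forall>y\<in>MY. dY (\<rho> (\<pi> y)) y \<le> K"
proof -
  have "(\<lambda>a. ((\<rho> \<circ> \<pi>) a, id a)) ` MY \<in> bounded_coarse MY dY"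
    using qi unfolding coarse_quasi_inverse_def close_maps_def by blast
  then show ?thesis unfolding bounded_coarse_def by auto
qed

lemma born_pi: "\<exists>s'. \<forall>y1\<in>MY. \<forall>y2\<in>MY. dY y1 y2 \<le> s \<longrightarrow> dX (\<pi> y1) (\<pi> y2) \<le> s'"
proof -
  let ?E = "{(y1,y2). y1 \<in> MY \<and> y2 \<in> MY \<and> dY y1 y2 \<le> s}"
  have "?E \<in> bounded_coarse MY dY" unfolding bounded_coarse_def by auto
  then have "(\<lambda>(a,a'). (\<pi> a, \<pi> a')) ` ?E \<in> bounded_coarse MX dX"
    using cmpi unfolding coarse_map_def by blast
  then obtain r where r: "\<forall>(a,b)\<in>(\<lambda>(a,a'). (\<pi> a, \<pi> a')) ` ?E. dX a b \<le> r"
    unfolding bounded_coarse_def by blast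
  show ?thesis
  proof (intro exI ballI impI)
    fix y1 y2 assume "y1 \<in> MY" "y2 \<in> MY" "dY y1 y2 \<le> s"
    then have "(\<pi> y1, \<pi> y2) \<in> (\<lambda>(a,a'). (\<pi> a, \<pi> a')) ` ?E"
      by (intro image_eqI[where x="(y1,y2)"]) auto
    then show "dX (\<pi> y1) (\<pi> y2) \<le> r" using r by blast
  qed
qed

lemma born_rho: "\<exists>s'. \<forall>y1\<in>MX. \<forall>y2\<in>MX. dX y1 y2 \<le> s \<longrightarrow> dY (\<rho> y1) (\<rho> y2) \<le> s'"
proof -
  let ?E = "{(y1,y2). y1 \<in> MX \<and> y2 \<in> MX \<and> dX y1 y2 \<le> s}"
  have "?E \<in> bounded_coarse MX dX" unfolding bounded_coarse_def by auto
  then have "(\<lambda>(a,a'). (\<rho> a, \<rho> a')) ` ?E \<in> bounded_coarse MY dY"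
    using qi unfolding coarse_quasi_inverse_def coarse_map_def by blast
  then obtain r where r: "\<forall>(a,b)\<in>(\<lambda>(a,a'). (\<rho> a, \<rho> a')) ` ?E. dY a b \<le> r"
    unfolding bounded_coarse_def by blast
  show ?thesis
  proof (intro exI ballI impI)
    fix y1 y2 assume "y1 \<in> MX" "y2 \<in> MX" "dX y1 y2 \<le> s"
    then have "(\<rho> y1, \<rho> y2) \<in> (\<lambda>(a,a'). (\<rho> a, \<rho> a')) ` ?E"
      by (intro image_eqI[where x="(y1,y2)"]) auto
    then show "dY (\<rho> y1) (\<rho> y2) \<le> r" using r by blast
  qed
qed

lemma proper_pi:
  assumes "X.mbounded B"
  shows "Y.mbounded {y\<in>MY. \<pi> y \<in> B}"
proof -
  have B: "B \<subseteq> MX" using assms X.mbounded_subset_mspace by blast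
  have "coarse_bounded (bounded_coarse MX dX) B" using X.cb_iff[OF B] assms by blast
  then have "coarse_bounded (bounded_coarse MY dY) {y\<in>MY. \<pi> y \<in> B}"
    using cmpi B unfolding coarse_map_def by blast
  then show ?thesis using Y.cb_iff[of "{y\<in>MY. \<pi> y \<in> B}"] by auto
qed

lemma rho_bounded:
  assumes "X.mbounded B"
  shows "Y.mbounded (\<rho> ` B)"
proof -
  have B: "B \<subseteq> MX" using assms X.mbounded_subset_mspace by blast
  have "B \<times> B \<in> bounded_coarse MX dX" using X.cb_iff[OF B] assms unfolding coarse_bounded_def by blast
  then have "(\<lambda>(a,a'). (\<rho> a, \<rho> a')) ` (B \<times> B) \<in> bounded_coarse MY dY"
    using qi unfolding coarse_quasi_inverse_def coarse_map_def by blast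
  moreover have "(\<lambda>(a,a'). (\<rho> a, \<rho> a')) ` (B \<times> B) = \<rho> ` B \<times> \<rho> ` B" by auto
  ultimately have "coarse_bounded (bounded_coarse MY dY) (\<rho> ` B)" unfolding coarse_bounded_def by simp
  then show ?thesis using Y.cb_iff[of "\<rho> ` B"] B rho_in by auto
qed

lemma topZ: "topspace Z = Inl ` MX \<union> Inr ` topspace W"
  using plus_topspace[OF admf] unfolding plusT_def by simp

lemma Inl_cont: "continuous_map TX Z Inl"
  unfolding continuous_map_closedin
proof (intro conjI allI impI)
  show "Inl \<in> topspace TX \<rightarrow> topspace Z" unfolding topZ X.topspace_mtopology by (rule funcsetI) (rule UnI1, rule imageI)
next
  fix C assume C: "closedin Z C"
  note cc = C[unfolded plus_closedin[OF admf]]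
  have c1: "closedin TX (Inl -` C)" using cc by (elim conjE)
  have "C \<subseteq> plusT TX W" using cc by (elim conjE)
  then have "Inl -` C \<subseteq> MX" unfolding plusT_def by auto
  then have "{x \<in> topspace TX. Inl x \<in> C} = Inl -` C" by auto
  then show "closedin TX {x \<in> topspace TX. Inl x \<in> C}" using c1 by simp
qed

lemma f_compact_empty:
  assumes "compactin TX K"
  shows "f K = {}"
proof -
  have "compactin Z (Inl ` K)" using image_compactin[OF assms Inl_cont] .
  then have "closedin Z (Inl ` K)" using compactin_imp_closedin hZ by blast
  then have "Inr ` f (Inl -` (Inl ` K :: ('x+'w) set)) \<subseteq> (Inl ` K :: ('x+'w) set)" unfolding plus_closedin[OF admf] by (elim conjE)
  moreover have "Inl -` (Inl ` K :: ('x+'w) set) = K" by auto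
  ultimately have "Inr ` f K \<subseteq> (Inl ` K :: ('x+'w) set)" by simp
  then show ?thesis by auto
qed

lemma f_empty_compact:
  assumes "closedin TX A" "f A = {}"
  shows "compactin TX A"
proof -
  have e: "Inr -` (Inl ` A :: ('x+'w) set) = {}" by auto
  have "closedin Z (Inl ` A)"
    unfolding plus_closedin[OF admf] e using assms closedin_subset[OF assms(1)]
    by (auto simp: inj_vimage_image_eq plusT_def)
  then have cA: "compactin Z (Inl ` A)" using closedin_compact_space cZ by blast
  show ?thesis unfolding compactin_def
  proof (intro conjI allI impI)
    show "A \<subseteq> topspace TX" using closedin_subset[OF assms(1)] .
  next
    fix U assume U: "(\<forall>V\<in>U. openin TX V) \<and> A \<subseteq> \<Union> U"
    have o: "\<forall>V\<in>(\<lambda>V. (Inl ` V :: ('x+'w) set)) ` U. openin Z V"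
    proof
      fix V' assume "V' \<in> (\<lambda>V. (Inl ` V :: ('x+'w) set)) ` U"
      then obtain V where V: "V \<in> U" "V' = Inl ` V" by auto
      have "V \<subseteq> MX" using U V openin_subset by (metis X.topspace_mtopology)
      moreover have "Inr -` (Inl ` V :: ('x+'w) set) = {}" by auto
      moreover have "openin TX V" using U V by blast
      ultimately show "openin Z V'" unfolding plus_openin[OF admf] plusP_def V
        by (auto simp: inj_vimage_image_eq plusT_def)
    qed
    have "Inl ` A \<subseteq> \<Union> ((\<lambda>V. (Inl ` V :: ('x+'w) set)) ` U)" using U by blast
    then obtain F where F: "finite F" "F \<subseteq> (\<lambda>V. (Inl ` V :: ('x+'w) set)) ` U" "Inl ` A \<subseteq> \<Union>F"
      using compactin_def[THEN iffD1, OF cA, THEN conjunct2, rule_format, of "(\<lambda>V. (Inl ` V :: ('x+'w) set)) ` U"] o by blast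
    then obtain G where G: "G \<subseteq> U" "finite G" "F = (\<lambda>V. (Inl ` V :: ('x+'w) set)) ` G"
      using finite_subset_image by metis
    have "A \<subseteq> \<Union>G" using F(3) G(3) by auto
    then show "\<exists>F. finite F \<and> F \<subseteq> U \<and> A \<subseteq> \<Union> F" using G by blast
  qed
qed

end

context KS begin

abbreviation "jX \<equiv> (Inl :: 'x \<Rightarrow> 'x + 'w)"
abbreviation "jW \<equiv> (Inr :: 'w \<Rightarrow> 'x + 'w)"
abbreviation "jY \<equiv> (Inl :: 'y \<Rightarrow> 'y + 'w)"
abbreviation "jW' \<equiv> (Inr :: 'w \<Rightarrow> 'y + 'w)"

lemma ballpair: "\<forall>(t,l)\<in>U. P t l \<Longrightarrow> (t,l) \<in> U \<Longrightarrow> P t l" by auto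

lemma near_small:
  assumes u: "u \<in> compact_uniformity Z"
  shows "\<exists>S. X.mbounded S \<and> (\<forall>a\<in>MX. \<forall>b\<in>MX. dX a b \<le> R \<longrightarrow> a \<notin> S \<longrightarrow> (jX a, jX b) \<in> u)"
proof -
  obtain \<Upsilon> where eq: "equicoarse dX \<Upsilon>" and arcs: "\<forall>x\<in>MX. \<forall>y\<in>MX. \<exists>ar\<in>\<Upsilon>. coarse_arc MX dX x y ar"
    and sm: "\<forall>u\<in>compact_uniformity Z.
            \<exists>S. S \<subseteq> MX \<and> X.mbounded S \<and>
              (\<forall>(t,l)\<in>\<Upsilon>. l ` {0..t} \<inter> S = {} \<longrightarrow> small_for u (Inl ` l ` {0..t}))"
    using exUps by blast
  obtain S0 where S0: "S0 \<subseteq> MX" "X.mbounded S0"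
     "\<forall>(t,l)\<in>\<Upsilon>. l ` {0..t} \<inter> S0 = {} \<longrightarrow> small_for u (jX ` l ` {0..t})"
    using sm u by blast
  have "\<bar>R\<bar> + 1 > 0" by simp
  then obtain s1 where s1: "s1 > 0" "\<forall>(t,l)\<in>\<Upsilon>. \<forall>a\<in>{0..t}. \<forall>b\<in>{0..t}. dX (l a) (l b) < \<bar>R\<bar> + 1 \<longrightarrow> \<bar>a - b\<bar> < s1"
    using eq unfolding equicoarse_def by blast
  have "s1 + 1 > 0" using s1 by simp
  then obtain s2 where s2: "s2 > 0" "\<forall>(t,l)\<in>\<Upsilon>. \<forall>a\<in>{0..t}. \<forall>b\<in>{0..t}. \<bar>a - b\<bar> < s1 + 1 \<longrightarrow> dX (l a) (l b) < s2"
    using eq unfolding equicoarse_def by blast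
  define S where "S = {x\<in>MX. \<exists>z\<in>S0. dX x z < s2}"
  have Sb: "X.mbounded S"
  proof (cases "S0 = {}")
    case True then show ?thesis unfolding S_def by simp
  next
    case False
    obtain c B where cB: "S0 \<subseteq> X.mcball c B" using S0(2) X.mbounded_def by blast
    have "S \<subseteq> X.mcball c (B + s2)"
    proof
      fix x assume "x \<in> S"
      then obtain z where z: "x \<in> MX" "z \<in> S0" "dX x z < s2" unfolding S_def by blast
      then have "c \<in> MX" "z \<in> MX" "dX c z \<le> B" using cB unfolding X.mcball_def by auto
      then have "dX c x \<le> B + s2" using X.triangle[of c z x] X.commute[of x z] z by linarith
      then show "x \<in> X.mcball c (B + s2)" using \<open>c \<in> MX\<close> z unfolding X.mcball_def by auto
    qed
    then show ?thesis using X.mbounded_def by blast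
  qed
  have "\<forall>a\<in>MX. \<forall>b\<in>MX. dX a b \<le> R \<longrightarrow> a \<notin> S \<longrightarrow> (jX a, jX b) \<in> u"
  proof (intro ballI impI)
    fix a b assume a: "a \<in> MX" and b: "b \<in> MX" and ab: "dX a b \<le> R" and aS: "a \<notin> S"
    obtain ar where ar: "ar \<in> \<Upsilon>" "coarse_arc MX dX a b ar" using arcs a b by blast
    obtain t l where tl: "ar = (t, l)" by (cases ar)
    have t0: "0 \<le> t" and l0: "l 0 = a" and lt: "l t = b" and lM: "l ` {0..t} \<subseteq> MX"
      using ar(2) unfolding tl coarse_arc_def coarse_embedding_interval_def by auto
    have "dX a b < \<bar>R\<bar> + 1" using ab by linarith
    then have "dX (l 0) (l t) < \<bar>R\<bar> + 1" using l0 lt by simp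
    moreover have "\<forall>a\<in>{0..t}. \<forall>b\<in>{0..t}. dX (l a) (l b) < \<bar>R\<bar> + 1 \<longrightarrow> \<bar>a - b\<bar> < s1"
      using ballpair[OF s1(2) ar(1)[unfolded tl]] .
    moreover have "0 \<in> {0..t}" "t \<in> {0..t}" using t0 by auto
    ultimately have "\<bar>0 - t\<bar> < s1" by blast
    then have ts: "t < s1" using t0 by simp
    have disj: "l ` {0..t} \<inter> S0 = {}"
    proof (rule ccontr)
      assume "l ` {0..t} \<inter> S0 \<noteq> {}"
      then obtain c where c: "c \<in> {0..t}" "l c \<in> S0" by blast
      have "\<bar>0 - c\<bar> < s1 + 1" using c ts by auto
      moreover have "\<forall>a\<in>{0..t}. \<forall>b\<in>{0..t}. \<bar>a - b\<bar> < s1 + 1 \<longrightarrow> dX (l a) (l b) < s2"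
        using ballpair[OF s2(2) ar(1)[unfolded tl]] .
      ultimately have "dX (l 0) (l c) < s2" using c t0 by simp
      then have "a \<in> S" unfolding S_def using a c l0 by auto
      then show False using aS by simp
    qed
    then have "small_for u (jX ` l ` {0..t})" using ballpair[OF S0(3) ar(1)[unfolded tl]] by blast
    moreover have "jX a \<in> jX ` l ` {0..t}" "jX b \<in> jX ` l ` {0..t}" using l0 lt t0 by force+
    ultimately show "(jX a, jX b) \<in> u" unfolding small_for_def by blast
  qed
  then show ?thesis using Sb by blast
qed

lemma mcball_compact: "compactin TX (X.mcball c r)"
proof (cases "c \<in> MX")
  case True then show ?thesis using propX by blast
next
  case False then have "X.mcball c r = {}" unfolding X.mcball_def by auto
  then show ?thesis by simp
qed

lemma mcball_compactY: "compactin TY (Y.mcball c r)"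
proof (cases "c \<in> MY")
  case True then show ?thesis using propY by blast
next
  case False then have "Y.mcball c r = {}" unfolding Y.mcball_def by auto
  then show ?thesis by simp
qed

lemma f_near_mono:
  assumes A: "closedin TX A" and B: "closedin TX B" and near: "\<forall>b\<in>B. \<exists>a\<in>A. dX a b \<le> R"
  shows "f B \<subseteq> f A"
proof
  fix w assume w: "w \<in> f B"
  show "w \<in> f A"
  proof (rule ccontr)
    assume nw: "w \<notin> f A"
    let ?C = "jX ` A \<union> jW ` f A"
    have AM: "A \<subseteq> MX" using closedin_subset[OF A] by simp
    have BM: "B \<subseteq> MX" using closedin_subset[OF B] by simp
    have fAc: "closedin W (f A)" using admf A unfolding admissible_map_def by blast
    have fBc: "closedin W (f B)" using admf B unfolding admissible_map_def by blast
    have e1: "Inl -` ?C = A" by auto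
    have e2: "Inr -` ?C = f A" by auto
    have Cc: "closedin Z ?C"
      unfolding plus_closedin[OF admf] e1 e2 using A fAc AM closedin_subset[OF fAc]
      by (auto simp: plusT_def)
    have wt: "w \<in> topspace W" using w closedin_subset[OF fBc] by blast
    have wZ: "jW w \<in> topspace Z - ?C" using wt nw topZ by auto
    have reg: "regular_space Z" using compact_Hausdorff_imp_regular_space cZ hZ by blast
    obtain V where V: "openin Z V" "jW w \<in> V" "disjnt ?C (Z closure_of V)"
      using reg[unfolded regular_space, rule_format, of ?C "jW w"] Cc wZ by blast
    let ?u = "topspace Z \<times> topspace Z - (Z closure_of V) \<times> ?C"
    have "closedin (prod_topology Z Z) ((Z closure_of V) \<times> ?C)"
      by (simp add: closedin_prod_Times_iff Cc)
    from openin_diff[OF openin_topspace this]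
    have uo: "openin (prod_topology Z Z) ?u" by (simp add: topspace_prod_topology)
    have "?u \<in> compact_uniformity Z"
      unfolding compact_uniformity_def
    proof (intro CollectI conjI exI)
      show "?u \<subseteq> topspace Z \<times> topspace Z" by blast
      show "openin (prod_topology Z Z) ?u" by (rule uo)
      show "{(z, z) |z. z \<in> topspace Z} \<subseteq> ?u" using V(3) unfolding disjnt_def by blast
    qed auto
    then obtain S where S: "X.mbounded S" "\<forall>a\<in>MX. \<forall>b\<in>MX. dX a b \<le> R \<longrightarrow> a \<notin> S \<longrightarrow> (jX a, jX b) \<in> ?u"
      using near_small by blast
    obtain c r where cr: "S \<subseteq> X.mcball c r" using S(1) X.mbounded_def by blast
    have "compactin Z (jX ` X.mcball c r)" using image_compactin[OF mcball_compact Inl_cont] .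
    then have Kc: "closedin Z (jX ` X.mcball c r)" using compactin_imp_closedin hZ by blast
    let ?V' = "V - jX ` X.mcball c r"
    have V'o: "openin Z ?V'" using openin_diff[OF V(1) Kc] .
    have wV': "jW w \<in> ?V'" using V(2) by blast
    have "\<exists>b\<in>B. jX b \<in> ?V'"
    proof (rule ccontr)
      assume nb: "\<not> (\<exists>b\<in>B. jX b \<in> ?V')"
      let ?D = "topspace Z - ?V'"
      have Dc: "closedin Z ?D" using closedin_diff[OF closedin_topspace V'o] .
      note cc = Dc[unfolded plus_closedin[OF admf]]
      have D1: "closedin TX (Inl -` ?D)" using cc by (elim conjE)
      have D2: "Inr ` f (Inl -` ?D) \<subseteq> ?D" using cc by (elim conjE)
      have "B \<subseteq> Inl -` ?D" using nb BM topZ by auto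
      then have "f B \<subseteq> f (Inl -` ?D)" using adm_mono[OF admf B D1] by blast
      then have "jW w \<in> ?D" using D2 w by blast
      then show False using wV' by blast
    qed
    then obtain b where b: "b \<in> B" "jX b \<in> V" "b \<notin> X.mcball c r" by blast
    have bS: "b \<notin> S" using b(3) cr by blast
    obtain a where a: "a \<in> A" "dX a b \<le> R" using near b(1) by blast
    have "dX b a \<le> R" using a AM BM b(1) X.commute by auto
    then have "(jX b, jX a) \<in> ?u" using S(2) bS a(1) b(1) AM BM by blast
    moreover have "jX b \<in> Z closure_of V" using b(2) closure_of_subset[OF openin_subset[OF V(1)]] by blast
    moreover have "jX a \<in> ?C" using a(1) by blast
    ultimately show False by blast
  qed
qed

end

context KS begin

abbreviation "\<Phi> \<equiv> case_sum (\<lambda>y. jX (\<pi> y)) jW"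
abbreviation "\<Psi> \<equiv> case_sum (\<lambda>x. jY (\<rho> x)) jW'"

lemma adm_fs: "admissible_map TY W fs"
  unfolding admissible_map_def
proof (intro conjI allI impI)
  fix A show "closedin W (fs A)" unfolding pull_admissible_def by simp
next
  have "f {} = {}" using admf unfolding admissible_map_def by blast
  then show "fs {} = {}" unfolding pull_admissible_def by simp
next
  fix A B assume A: "closedin TY A" and B: "closedin TY B"
  have "f (TX closure_of (\<pi> ` A) \<union> TX closure_of (\<pi> ` B)) = f (TX closure_of (\<pi> ` A)) \<union> f (TX closure_of (\<pi> ` B))"
    using admf unfolding admissible_map_def by (meson closedin_closure_of)
  then show "fs (A \<union> B) = fs A \<union> fs B" unfolding pull_admissible_def by (simp add: image_Un)
qed

lemma topZ': "topspace Z' = jY ` MY \<union> jW' ` topspace W"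
  using plus_topspace[OF adm_fs] unfolding plusT_def by simp

lemma fs_sub: "fs A \<subseteq> topspace W"
  unfolding pull_admissible_def by (rule closure_of_subset_topspace)

lemma Phi_cont: "continuous_map Z' Z \<Phi>"
  unfolding continuous_map_closedin
proof (intro conjI allI impI)
  show "\<Phi> \<in> topspace Z' \<rightarrow> topspace Z" unfolding topZ' topZ using pi_in by auto
next
  fix C assume C: "closedin Z C"
  note cc = C[unfolded plus_closedin[OF admf]]
  have C1: "closedin TX (Inl -` C)" using cc by (elim conjE)
  have C2: "closedin W (Inr -` C)" using cc by (elim conjE)
  have C3: "Inr ` f (Inl -` C) \<subseteq> C" using cc by (elim conjE)
  have C0: "C \<subseteq> plusT TX W" using cc by (elim conjE)
  let ?D = "{z \<in> topspace Z'. \<Phi> z \<in> C}"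
  have e1: "Inl -` ?D = {y \<in> topspace TY. \<pi> y \<in> Inl -` C}" using topZ' by auto
  have D1: "closedin TY (Inl -` ?D)" unfolding e1
    using contpi[unfolded continuous_map_closedin] C1 by blast
  have e2: "Inr -` ?D = Inr -` C" using topZ' C0 unfolding plusT_def by auto
  have D2: "closedin W (Inr -` ?D)" unfolding e2 by (rule C2)
  have "\<pi> ` (Inl -` ?D) \<subseteq> Inl -` C" by auto
  then have "TX closure_of (\<pi> ` (Inl -` ?D)) \<subseteq> Inl -` C" using closure_of_minimal C1 by blast
  then have "f (TX closure_of (\<pi> ` (Inl -` ?D))) \<subseteq> f (Inl -` C)"
    using adm_mono[OF admf closedin_closure_of C1] by blast
  also have "\<dots> \<subseteq> Inr -` C" using C3 by auto
  finally have "fs (Inl -` ?D) \<subseteq> Inr -` C"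
    unfolding pull_admissible_def using closure_of_minimal C2 by blast
  then have fsD: "fs (Inl -` ?D) \<subseteq> Inr -` C" .
  have D3: "Inr ` fs (Inl -` ?D) \<subseteq> ?D"
  proof
    fix z :: "'y + 'w" assume "z \<in> Inr ` fs (Inl -` ?D)"
    then obtain w where w: "z = Inr w" "w \<in> fs (Inl -` ?D)" by blast
    have "w \<in> topspace W" using w(2) fs_sub by blast
    then have "z \<in> topspace Z'" using w(1) topZ' by simp
    moreover have "\<Phi> z \<in> C" using w fsD by auto
    ultimately show "z \<in> ?D" by blast
  qed
  have D0: "?D \<subseteq> plusT TY W" using plus_topspace[OF adm_fs] by auto
  show "closedin Z' ?D" unfolding plus_closedin[OF adm_fs] using D0 D1 D2 D3 by blast
qed

lemma Psi_cont: "continuous_map Z Z' \<Psi>"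
  unfolding continuous_map_closedin
proof (intro conjI allI impI)
  show "\<Psi> \<in> topspace Z \<rightarrow> topspace Z'" unfolding topZ' topZ using rho_in by auto
next
  fix C assume C: "closedin Z' C"
  note cc = C[unfolded plus_closedin[OF adm_fs]]
  have C1: "closedin TY (Inl -` C)" using cc by (elim conjE)
  have C2: "closedin W (Inr -` C)" using cc by (elim conjE)
  have C3: "Inr ` fs (Inl -` C) \<subseteq> C" using cc by (elim conjE)
  have C0: "C \<subseteq> plusT TY W" using cc by (elim conjE)
  have CM: "Inl -` C \<subseteq> MY" using C0 unfolding plusT_def by auto
  obtain K where K: "\<forall>x\<in>MX. dX (\<pi> (\<rho> x)) x \<le> K" using KX_ex by blast
  let ?D = "{z \<in> topspace Z. \<Psi> z \<in> C}"
  have e1: "Inl -` ?D = {x \<in> topspace TX. \<rho> x \<in> Inl -` C}" using topZ by auto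
  have D1: "closedin TX (Inl -` ?D)" unfolding e1
    using contrho[unfolded continuous_map_closedin] C1 by blast
  have e2: "Inr -` ?D = Inr -` C" using topZ C0 unfolding plusT_def by auto
  have D2: "closedin W (Inr -` ?D)" unfolding e2 by (rule C2)
  let ?A = "TX closure_of (\<pi> ` (Inl -` C))"
  have piC: "\<pi> ` (Inl -` C) \<subseteq> topspace TX" using CM pi_in by auto
  have near: "\<forall>b\<in>Inl -` ?D. \<exists>a\<in>?A. dX a b \<le> K"
  proof
    fix b assume b: "b \<in> Inl -` ?D"
    then have bM: "b \<in> MX" "\<rho> b \<in> Inl -` C" using e1 by auto
    have "\<pi> (\<rho> b) \<in> ?A" using closure_of_subset[OF piC] bM by blast
    then show "\<exists>a\<in>?A. dX a b \<le> K" using K bM by blast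
  qed
  have "f (Inl -` ?D) \<subseteq> f ?A" using f_near_mono[OF closedin_closure_of D1 near] .
  also have "\<dots> \<subseteq> fs (Inl -` C)" unfolding pull_admissible_def
    apply (rule closure_of_subset)
    using admf unfolding admissible_map_def by (meson closedin_closure_of closedin_subset)
  also have "\<dots> \<subseteq> Inr -` C" using C3 by auto
  finally have "f (Inl -` ?D) \<subseteq> Inr -` C" .
  moreover have "Inr -` C \<subseteq> topspace W" using C0 unfolding plusT_def by auto
  ultimately have fD: "f (Inl -` ?D) \<subseteq> Inr -` C \<inter> topspace W" by blast
  have D3: "Inr ` f (Inl -` ?D) \<subseteq> ?D"
  proof
    fix z :: "'x + 'w" assume "z \<in> Inr ` f (Inl -` ?D)"
    then obtain w where w: "z = Inr w" "w \<in> f (Inl -` ?D)" by blast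
    have "w \<in> topspace W" using w(2) fD by blast
    then have "z \<in> topspace Z" using w(1) topZ by simp
    moreover have "\<Psi> z \<in> C" using w fD by auto
    ultimately show "z \<in> ?D" by blast
  qed
  have D0: "?D \<subseteq> plusT TX W" using plus_topspace[OF admf] by auto
  show "closedin Z ?D" unfolding plus_closedin[OF admf] using D0 D1 D2 D3 by blast
qed

end

context KS begin

lemma noW_bounded:
  assumes D: "closedin Z' D" and DW: "Inr -` D = {}"
  shows "Y.mbounded (Inl -` D)"
proof -
  note cc = D[unfolded plus_closedin[OF adm_fs]]
  have C0: "D \<subseteq> plusT TY W" using cc by (elim conjE)
  have C3: "Inr ` fs (Inl -` D) \<subseteq> D" using cc by (elim conjE)
  have DM: "Inl -` D \<subseteq> MY" using C0 unfolding plusT_def by auto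
  have fs0: "fs (Inl -` D) = {}" using C3 DW by auto
  let ?A = "TX closure_of (\<pi> ` (Inl -` D))"
  have "f ?A \<subseteq> topspace W" using admf unfolding admissible_map_def by (meson closedin_closure_of closedin_subset)
  moreover have "disjnt (topspace W) (f ?A)" using fs0 unfolding pull_admissible_def closure_of_eq_empty_gen .
  ultimately have "f ?A = {}" unfolding disjnt_def by blast
  then have "compactin TX ?A" using f_empty_compact[OF closedin_closure_of] by blast
  then have "X.mbounded ?A" using X.compactin_imp_mbounded by blast
  then have "Y.mbounded {y\<in>MY. \<pi> y \<in> ?A}" by (rule proper_pi)
  moreover have s: "\<pi> ` (Inl -` D) \<subseteq> topspace TX" using DM pi_in by auto
  have "\<pi> ` (Inl -` D) \<subseteq> ?A" using closure_of_subset[OF s] .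
  then have "Inl -` D \<subseteq> {y\<in>MY. \<pi> y \<in> ?A}" using DM by blast
  ultimately show ?thesis using Y.mbounded_subset by blast
qed

lemma closed_bounded_compactY:
  assumes "closedin TY A" "Y.mbounded A"
  shows "compactin TY A"
proof -
  obtain c r where "A \<subseteq> Y.mcball c r" using assms(2) Y.mbounded_def by blast
  then show ?thesis using closed_compactin[OF mcball_compactY _ assms(1)] by blast
qed

lemma cW: "compact_space W"
  unfolding compact_space_alt
proof (intro allI impI)
  fix U assume U: "(\<forall>V\<in>U. openin W V) \<and> topspace W \<subseteq> \<Union> U"
  let ?g = "\<lambda>V. jX ` MX \<union> jW ` V"
  let ?V = "?g ` (insert {} U)"
  have o: "\<forall>Q\<in>?V. openin Z Q"
  proof
    fix Q assume "Q \<in> ?V"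
    then obtain V where V: "V \<in> insert {} U" "Q = ?g V" by blast
    have oV: "openin W V" using V(1) U by auto
    have e1: "Inl -` Q = MX" using V(2) by auto
    have e2: "Inr -` Q = V" using V(2) by auto
    have "f {} = {}" using admf unfolding admissible_map_def by blast
    then show "openin Z Q" unfolding plus_openin[OF admf] plusP_def e1 e2
      using oV openin_subset[OF oV] V(2) by (auto simp: plusT_def)
  qed
  have "topspace Z \<subseteq> \<Union>?V"
  proof
    fix z assume z: "z \<in> topspace Z"
    show "z \<in> \<Union>?V"
    proof (cases z)
      case (Inl x)
      then have "z \<in> ?g {}" using z topZ by auto
      moreover have "?g {} \<in> ?V" by blast
      ultimately show ?thesis by blast
    next
      case (Inr w)
      then have "w \<in> topspace W" using z topZ by auto
      then obtain V where V: "V \<in> U" "w \<in> V" using U by blast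
      then have "z \<in> ?g V" using Inr by blast
      moreover have "?g V \<in> ?V" using V by blast
      ultimately show ?thesis by blast
    qed
  qed
  then obtain F where F: "finite F" "F \<subseteq> ?V" "topspace Z \<subseteq> \<Union>F"
    using compact_space_alt[THEN iffD1, OF cZ, rule_format, of ?V] o by blast
  then obtain G where G: "G \<subseteq> insert {} U" "finite G" "F = ?g ` G"
    using finite_subset_image by metis
  have "topspace W \<subseteq> \<Union>(G - {{}})"
  proof
    fix w assume "w \<in> topspace W"
    then have "jW w \<in> \<Union>F" using F(3) topZ by auto
    then obtain V where "V \<in> G" "jW w \<in> ?g V" using G(3) by blast
    then show "w \<in> \<Union>(G - {{}})" by auto
  qed
  moreover have "finite (G - {{}})" "G - {{}} \<subseteq> U" using G by auto
  ultimately show "\<exists>F. finite F \<and> F \<subseteq> U \<and> topspace W \<subseteq> \<Union> F" by blast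
qed

lemma cZ': "compact_space Z'"
  unfolding compact_space_alt
proof (intro allI impI)
  fix U assume U: "(\<forall>Q\<in>U. openin Z' Q) \<and> topspace Z' \<subseteq> \<Union> U"
  have oW: "\<forall>V\<in>(\<lambda>Q. Inr -` Q) ` U. openin W V"
    using U plus_openin[OF adm_fs] unfolding plusP_def by auto
  have "topspace W \<subseteq> \<Union>((\<lambda>Q. Inr -` Q) ` U)"
  proof
    fix w assume "w \<in> topspace W"
    then have "jW' w \<in> topspace Z'" using topZ' by auto
    then obtain Q where "Q \<in> U" "jW' w \<in> Q" using U by blast
    then show "w \<in> \<Union>((\<lambda>Q. Inr -` Q) ` U)" by blast
  qed
  then obtain F0' where F0': "finite F0'" "F0' \<subseteq> (\<lambda>Q. Inr -` Q) ` U" "topspace W \<subseteq> \<Union>F0'"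
    using compact_space_alt[THEN iffD1, OF cW, rule_format, of "(\<lambda>Q. Inr -` Q) ` U"] oW by blast
  then obtain F0 where F0: "F0 \<subseteq> U" "finite F0" "F0' = (\<lambda>Q. Inr -` Q) ` F0"
    using finite_subset_image by metis
  let ?D = "topspace Z' - \<Union>F0"
  have "openin Z' (\<Union>F0)" using U F0(1) by blast
  then have Dc: "closedin Z' ?D" by blast
  have DW: "Inr -` ?D = {}"
  proof -
    { fix w assume w: "jW' w \<in> ?D"
      then have "w \<in> topspace W" using topZ' by auto
      then obtain Q where "Q \<in> F0" "w \<in> Inr -` Q" using F0'(3) F0(3) by auto
      then have False using w by auto }
    then show ?thesis by blast
  qed
  have cD: "compactin TY (Inl -` ?D)"
    using closed_bounded_compactY noW_bounded[OF Dc DW] Dc[unfolded plus_closedin[OF adm_fs]] by blast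
  have oY: "\<forall>V\<in>(\<lambda>Q. Inl -` Q) ` U. openin TY V"
    using U plus_openin[OF adm_fs] unfolding plusP_def by auto
  have "Inl -` ?D \<subseteq> \<Union>((\<lambda>Q. Inl -` Q) ` U)"
  proof
    fix y assume "y \<in> Inl -` ?D"
    then have "jY y \<in> topspace Z'" by auto
    then obtain Q where "Q \<in> U" "jY y \<in> Q" using U by blast
    then show "y \<in> \<Union>((\<lambda>Q. Inl -` Q) ` U)" by blast
  qed
  then obtain F1' where F1': "finite F1'" "F1' \<subseteq> (\<lambda>Q. Inl -` Q) ` U" "Inl -` ?D \<subseteq> \<Union>F1'"
    using compactin_def[THEN iffD1, OF cD, THEN conjunct2, rule_format, of "(\<lambda>Q. Inl -` Q) ` U"] oY by blast
  then obtain F1 where F1: "F1 \<subseteq> U" "finite F1" "F1' = (\<lambda>Q. Inl -` Q) ` F1"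
    using finite_subset_image by metis
  have "topspace Z' \<subseteq> \<Union>(F0 \<union> F1)"
  proof
    fix z assume z: "z \<in> topspace Z'"
    show "z \<in> \<Union>(F0 \<union> F1)"
    proof (cases "z \<in> \<Union>F0")
      case True then show ?thesis by blast
    next
      case False
      then have zD: "z \<in> ?D" using z by blast
      then obtain y where y: "z = jY y" using DW by (cases z) auto
      then have "y \<in> \<Union>F1'" using zD F1'(3) by auto
      then show ?thesis using y F1(3) by auto
    qed
  qed
  then show "\<exists>F. finite F \<and> F \<subseteq> U \<and> topspace Z' \<subseteq> \<Union> F"
    using F0 F1 by (intro exI[of _ "F0 \<union> F1"]) auto
qed

lemma jY_open: "openin TY V \<Longrightarrow> openin Z' (jY ` V)"
proof -
  assume V: "openin TY V"
  have e1: "Inl -` (jY ` V) = V" by auto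
  have e2: "Inr -` (jY ` V) = {}" by auto
  show ?thesis unfolding plus_openin[OF adm_fs] plusP_def e1 e2
    using V openin_subset[OF V] by (auto simp: plusT_def)
qed

lemma jY_closed: "compactin TY C \<Longrightarrow> closedin Z' (jY ` C)"
proof -
  assume C: "compactin TY C"
  have "compactin TX (\<pi> ` C)" using image_compactin[OF C contpi] .
  moreover then have "closedin TX (\<pi> ` C)" using compactin_imp_closedin X.Hausdorff_space_mtopology by blast
  ultimately have "fs C = {}" unfolding pull_admissible_def
    using f_compact_empty by (simp add: closure_of_closedin)
  moreover have "closedin TY C" using compactin_imp_closedin Y.Hausdorff_space_mtopology C by blast
  moreover have e1: "Inl -` (jY ` C) = C" by auto
  moreover have e2: "Inr -` (jY ` C) = {}" by auto
  moreover have "C \<subseteq> MY" using compactin_subset_topspace[OF C] by simp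
  ultimately show ?thesis unfolding plus_closedin[OF adm_fs] e1 e2
    by (auto simp: plusT_def)
qed

lemma sepYW:
  assumes y: "y \<in> MY" and w: "w \<in> topspace W"
  shows "\<exists>U V. openin Z' U \<and> openin Z' V \<and> jY y \<in> U \<and> jW' w \<in> V \<and> disjnt U V"
proof (intro exI conjI)
  show "openin Z' (jY ` Y.mball y 1)" using jY_open by blast
  show "openin Z' (topspace Z' - jY ` Y.mcball y 1)"
    using jY_closed[OF mcball_compactY] by blast
  show "jY y \<in> jY ` Y.mball y 1" using y by simp
  show "jW' w \<in> topspace Z' - jY ` Y.mcball y 1" using w topZ' by auto
  show "disjnt (jY ` Y.mball y 1) (topspace Z' - jY ` Y.mcball y 1)"
    using Y.mball_subset_mcball unfolding disjnt_def by blast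
qed

lemma hZ': "Hausdorff_space Z'"
  unfolding Hausdorff_space_def
proof (intro allI impI)
  fix x y assume xy: "x \<in> topspace Z' \<and> y \<in> topspace Z' \<and> x \<noteq> y"
  show "\<exists>U V. openin Z' U \<and> openin Z' V \<and> x \<in> U \<and> y \<in> V \<and> disjnt U V"
  proof (cases x)
    case (Inl a) note xa = this
    show ?thesis
    proof (cases y)
      case (Inl b)
      have "a \<in> MY" "b \<in> MY" "a \<noteq> b" using xy xa Inl topZ' by auto
      then obtain U V where UV: "openin TY U" "openin TY V" "a \<in> U" "b \<in> V" "disjnt U V"
        using Y.Hausdorff_space_mtopology unfolding Hausdorff_space_def by (metis Y.topspace_mtopology)
      have o1: "openin Z' (jY ` U)" "openin Z' (jY ` V)" using UV jY_open by blast+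
      have i1: "x \<in> jY ` U" "y \<in> jY ` V" using UV xa Inl by auto
      have d: "disjnt (jY ` U) (jY ` V)" using UV(5) unfolding disjnt_def by blast
      show ?thesis using o1 i1 d by blast
    next
      case (Inr w)
      have "a \<in> MY" "w \<in> topspace W" using xy xa Inr topZ' by auto
      then show ?thesis using sepYW xa Inr by blast
    qed
  next
    case (Inr w) note xw = this
    show ?thesis
    proof (cases y)
      case (Inl b)
      have "b \<in> MY" "w \<in> topspace W" using xy xw Inl topZ' by auto
      then obtain U V where "openin Z' U" "openin Z' V" "jY b \<in> U" "jW' w \<in> V" "disjnt U V"
        using sepYW by blast
      then show ?thesis using xw Inl disjnt_sym by blast
    next
      case (Inr v)
      have "jW w \<in> topspace Z" "jW v \<in> topspace Z" "jW w \<noteq> jW v" using xy xw Inr topZ' topZ by auto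
      then obtain U V where UV: "openin Z U" "openin Z V" "jW w \<in> U" "jW v \<in> V" "disjnt U V"
        using hZ unfolding Hausdorff_space_def by blast
      have o1: "openin Z' {z \<in> topspace Z'. \<Phi> z \<in> U}" using openin_continuous_map_preimage[OF Phi_cont UV(1)] .
      have o2: "openin Z' {z \<in> topspace Z'. \<Phi> z \<in> V}" using openin_continuous_map_preimage[OF Phi_cont UV(2)] .
      have i1: "x \<in> {z \<in> topspace Z'. \<Phi> z \<in> U}" using xy xw UV(3) by simp
      have i2: "y \<in> {z \<in> topspace Z'. \<Phi> z \<in> V}" using xy Inr UV(4) by simp
      have d: "disjnt {z \<in> topspace Z'. \<Phi> z \<in> U} {z \<in> topspace Z'. \<Phi> z \<in> V}"
        using UV(5) unfolding disjnt_def by blast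
      show ?thesis using o1 o2 i1 i2 d by blast
    qed
  qed
qed

lemma dZ': "Z' closure_of (jY ` MY) = topspace Z'"
proof
  show "Z' closure_of jY ` MY \<subseteq> topspace Z'" by (rule closure_of_subset_topspace)
next
  show "topspace Z' \<subseteq> Z' closure_of jY ` MY"
  proof
    fix z assume z: "z \<in> topspace Z'"
    show "z \<in> Z' closure_of jY ` MY"
    proof (cases z)
      case (Inl y)
      have s: "jY ` MY \<subseteq> topspace Z'" using topZ' by auto
      have "y \<in> MY" using z Inl topZ' by auto
      then have "z \<in> jY ` MY" using Inl by simp
      then show ?thesis using closure_of_subset[OF s] by blast
    next
      case (Inr w)
      have wt: "w \<in> topspace W" using z Inr topZ' by auto
      let ?D = "Z' closure_of (jY ` MY)"
      have Dc: "closedin Z' ?D" by simp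
      note cc = Dc[unfolded plus_closedin[OF adm_fs]]
      have C0: "?D \<subseteq> plusT TY W" using cc by (elim conjE)
      have C2: "closedin W (Inr -` ?D)" using cc by (elim conjE)
      have C3: "Inr ` fs (Inl -` ?D) \<subseteq> ?D" using cc by (elim conjE)
      have s: "jY ` MY \<subseteq> topspace Z'" using topZ' by auto
      have sub: "jY ` MY \<subseteq> ?D" using closure_of_subset[OF s] .
      have e1: "Inl -` ?D = MY" using C0 sub unfolding plusT_def by auto
      obtain K where K: "\<forall>x\<in>MX. dX (\<pi> (\<rho> x)) x \<le> K" using KX_ex by blast
      let ?A = "TX closure_of (\<pi> ` MY)"
      have piM: "\<pi> ` MY \<subseteq> topspace TX" using pi_in by auto
      have near: "\<forall>b\<in>MX. \<exists>a\<in>?A. dX a b \<le> K"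
      proof
        fix b assume b: "b \<in> MX"
        have "\<pi> (\<rho> b) \<in> ?A" using closure_of_subset[OF piM] rho_in[OF b] by blast
        then show "\<exists>a\<in>?A. dX a b \<le> K" using K b by blast
      qed
      have cM: "closedin TX MX" using closedin_topspace[of TX] by simp
      have "f MX \<subseteq> f ?A" using f_near_mono[OF closedin_closure_of cM near] .
      also have "\<dots> \<subseteq> fs MY" unfolding pull_admissible_def
        apply (rule closure_of_subset)
        using admf unfolding admissible_map_def by (meson closedin_closure_of closedin_subset)
      also have "\<dots> \<subseteq> Inr -` ?D" using C3 e1 by auto
      finally have fM: "f MX \<subseteq> Inr -` ?D" .
      let ?E = "jX ` MX \<union> jW ` (Inr -` ?D)"
      have DW: "Inr -` ?D \<subseteq> topspace W" using C0 unfolding plusT_def by auto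
      have f1: "Inl -` ?E = MX" by auto
      have f2: "Inr -` ?E = Inr -` ?D" by auto
      have Ec: "closedin Z ?E" unfolding plus_closedin[OF admf] f1 f2
        using C2 DW fM by (auto simp: plusT_def)
      have "Z closure_of (jX ` MX) \<subseteq> ?E" using closure_of_minimal[OF _ Ec] by blast
      moreover have "jW w \<in> topspace Z" using topZ wt by simp
      moreover have "jW w \<in> Z closure_of (jX ` MX)" using dZ \<open>jW w \<in> topspace Z\<close> by simp
      ultimately have "jW w \<in> ?E" by blast
      then have "w \<in> Inr -` ?D" by auto
      then show ?thesis using Inr by simp
    qed
  qed
qed

lemma compZ': "is_compactification TY W fs"
  unfolding is_compactification_def using adm_fs cZ' hZ' dZ' by simp

end

lemma comp_uniform:
  fixes T :: "'a topology"
  assumes cT: "compact_space T" and hT: "Hausdorff_space T"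
    and U: "openin (prod_topology T T) U" and diag: "\<forall>z\<in>topspace T. (z,z) \<in> U"
  shows "\<exists>V. openin (prod_topology T T) V \<and> (\<forall>z\<in>topspace T. (z,z) \<in> V) \<and>
            (\<forall>a b c. (a,b) \<in> V \<longrightarrow> (b,c) \<in> V \<longrightarrow> (a,c) \<in> U)"
proof -
  let ?top = "topspace T"
  let ?C = "?top \<times> ?top - U"
  have Cc: "closedin (prod_topology T T) ?C"
    using closedin_diff[OF closedin_topspace U] by (simp add: topspace_prod_topology)
  have cP: "compact_space (prod_topology T T)" using cT by (simp add: compact_space_prod_topology)
  have Ccomp: "compactin (prod_topology T T) ?C" using closedin_compact_space[OF cP Cc] .
  have reg: "regular_space T" using compact_Hausdorff_imp_regular_space[OF cT hT] .
  define goodq where "goodq B q \<longleftrightarrow> (B = fst q \<times> fst (snd q) \<and> openin T (fst q) \<and> openin T (fst (snd q))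
      \<and> openin T (fst (snd (snd q))) \<and> openin T (snd (snd (snd q)))
      \<and> T closure_of (fst q) \<subseteq> fst (snd (snd q)) \<and> T closure_of (fst (snd q)) \<subseteq> snd (snd (snd q))
      \<and> disjnt (fst (snd (snd q))) (snd (snd (snd q))))" for B q
  define good where "good B \<longleftrightarrow> (\<exists>q. goodq B q)" for B
  have shrink: "\<exists>P. openin T P \<and> x \<in> P \<and> T closure_of P \<subseteq> P'" if "openin T P'" "x \<in> P'" for x P'
  proof -
    have "closedin T (?top - P')" using that(1) by blast
    moreover have "x \<in> ?top - (?top - P')" using that openin_subset by blast
    ultimately obtain P where P: "openin T P" "x \<in> P" "disjnt (?top - P') (T closure_of P)"
      using reg[unfolded regular_space, rule_format, of "?top - P'" x] by blast
    have "T closure_of P \<subseteq> P'" using P(3) closure_of_subset_topspace[of T P] unfolding disjnt_def by blast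
    then show ?thesis using P by blast
  qed
  have cover: "?C \<subseteq> \<Union>{B. good B \<and> openin (prod_topology T T) B}"
  proof
    fix p assume p: "p \<in> ?C"
    obtain x y where xy: "p = (x,y)" by (cases p)
    have xyT: "x \<in> ?top" "y \<in> ?top" "x \<noteq> y" using p xy diag by auto
    obtain P' R' where PR': "openin T P'" "openin T R'" "x \<in> P'" "y \<in> R'" "disjnt P' R'"
      using hT xyT unfolding Hausdorff_space_def by blast
    obtain P where P: "openin T P" "x \<in> P" "T closure_of P \<subseteq> P'" using shrink PR' by blast
    obtain R where R: "openin T R" "y \<in> R" "T closure_of R \<subseteq> R'" using shrink PR' by blast
    have "good (P \<times> R)" unfolding good_def goodq_def using P R PR' by (intro exI[of _ "(P,R,P',R')"]) simp
    moreover have "openin (prod_topology T T) (P \<times> R)" using P R by (simp add: openin_prod_Times_iff)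
    moreover have "p \<in> P \<times> R" using xy P R by simp
    ultimately show "p \<in> \<Union>{B. good B \<and> openin (prod_topology T T) B}" by blast
  qed
  obtain F where F: "finite F" "F \<subseteq> {B. good B \<and> openin (prod_topology T T) B}" "?C \<subseteq> \<Union>F"
    using compactin_def[THEN iffD1, OF Ccomp, THEN conjunct2, rule_format, of "{B. good B \<and> openin (prod_topology T T) B}"] cover
    by blast
  have "\<forall>B\<in>F. \<exists>q. goodq B q"
  proof
    fix B assume "B \<in> F"
    then have "good B" using F(2) by blast
    then show "\<exists>q. goodq B q" unfolding good_def .
  qed
  then obtain g where g0: "\<forall>B\<in>F. goodq B (g B)" using bchoice[of F "goodq"] by blast
  have g: "\<forall>B\<in>F. B = fst (g B) \<times> fst (snd (g B)) \<and> openin T (fst (g B)) \<and> openin T (fst (snd (g B)))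
      \<and> openin T (fst (snd (snd (g B)))) \<and> openin T (snd (snd (snd (g B))))
      \<and> T closure_of (fst (g B)) \<subseteq> fst (snd (snd (g B))) \<and> T closure_of (fst (snd (g B))) \<subseteq> snd (snd (snd (g B)))
      \<and> disjnt (fst (snd (snd (g B)))) (snd (snd (snd (g B))))"
    using g0 unfolding goodq_def by blast
  define K where "K B = (T closure_of (fst (g B))) \<times> (?top - fst (snd (snd (g B))))
       \<union> (?top - snd (snd (snd (g B)))) \<times> (T closure_of (fst (snd (g B))))" for B
  define V where "V = (\<Inter>B\<in>F. topspace (prod_topology T T) - K B) \<inter> topspace (prod_topology T T)"
  have Kc: "closedin (prod_topology T T) (K B)" if "B \<in> F" for B
  proof -
    have c1: "closedin T (?top - fst (snd (snd (g B))))" "closedin T (?top - snd (snd (snd (g B))))"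
      using g that by blast+
    show ?thesis unfolding K_def
      by (intro closedin_Un) (simp_all add: closedin_prod_Times_iff c1)
  qed
  have Vo: "openin (prod_topology T T) V"
    unfolding V_def using F(1) Kc by (intro openin_INT) blast+
  have Vd: "\<forall>z\<in>?top. (z,z) \<in> V"
  proof
    fix z assume z: "z \<in> ?top"
    have "(z,z) \<notin> K B" if "B \<in> F" for B
      using g that z unfolding K_def by blast
    then show "(z,z) \<in> V" unfolding V_def using z by (simp add: topspace_prod_topology)
  qed
  have Vc: "\<forall>a b c. (a,b) \<in> V \<longrightarrow> (b,c) \<in> V \<longrightarrow> (a,c) \<in> U"
  proof (intro allI impI)
    fix a b c assume ab: "(a,b) \<in> V" and bc: "(b,c) \<in> V"
    have top: "a \<in> ?top" "b \<in> ?top" "c \<in> ?top" using ab bc unfolding V_def by (auto simp: topspace_prod_topology)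
    show "(a,c) \<in> U"
    proof (rule ccontr)
      assume "(a,c) \<notin> U"
      then have "(a,c) \<in> ?C" using top by blast
      then obtain B where B: "B \<in> F" "(a,c) \<in> B" using F(3) by blast
      let ?P = "fst (g B)" and ?R = "fst (snd (g B))" and ?P' = "fst (snd (snd (g B)))" and ?R' = "snd (snd (snd (g B)))"
      have gB: "B = ?P \<times> ?R" "openin T ?P" "openin T ?R" "T closure_of ?P \<subseteq> ?P'" "T closure_of ?R \<subseteq> ?R'" "disjnt ?P' ?R'"
        using g B(1) by blast+
      have aP: "a \<in> T closure_of ?P" using B(2) gB(1) closure_of_subset[OF openin_subset[OF gB(2)]] by blast
      have cR: "c \<in> T closure_of ?R" using B(2) gB(1) closure_of_subset[OF openin_subset[OF gB(3)]] by blast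
      have "(a,b) \<notin> K B" using ab B(1) unfolding V_def by blast
      then have bP: "b \<in> ?P'" using aP top unfolding K_def by blast
      have "(b,c) \<notin> K B" using bc B(1) unfolding V_def by blast
      then have bR: "b \<in> ?R'" using cR top unfolding K_def by blast
      show False using bP bR gB(6) unfolding disjnt_def by blast
    qed
  qed
  show ?thesis using Vo Vd Vc by blast
qed

context KS begin

lemma G_close:
  assumes V: "openin (prod_topology Z' Z') V" and Vd: "\<forall>z\<in>topspace Z'. (z,z) \<in> V"
  shows "\<exists>S. Y.mbounded S \<and> (\<forall>y\<in>MY. y \<notin> S \<longrightarrow> (jY y, jY (\<rho> (\<pi> y))) \<in> V \<and> (jY (\<rho> (\<pi> y)), jY y) \<in> V)"
proof -
  have gc: "continuous_map Z' Z' (\<Psi> \<circ> \<Phi>)" using continuous_map_compose[OF Phi_cont Psi_cont] .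
  have h1: "continuous_map Z' (prod_topology Z' Z') (\<lambda>z. (z, (\<Psi> \<circ> \<Phi>) z))"
    using gc[unfolded o_def] by (intro continuous_map_pairedI) (simp_all add: continuous_map_id[unfolded id_def] o_def)
  have h2: "continuous_map Z' (prod_topology Z' Z') (\<lambda>z. ((\<Psi> \<circ> \<Phi>) z, z))"
    using gc[unfolded o_def] by (intro continuous_map_pairedI) (simp_all add: continuous_map_id[unfolded id_def] o_def)
  let ?O = "{z \<in> topspace Z'. (z, (\<Psi> \<circ> \<Phi>) z) \<in> V} \<inter> {z \<in> topspace Z'. ((\<Psi> \<circ> \<Phi>) z, z) \<in> V}"
  have Oo: "openin Z' ?O"
    using openin_continuous_map_preimage[OF h1 V] openin_continuous_map_preimage[OF h2 V] by blast
  let ?D = "topspace Z' - ?O"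
  have Dc: "closedin Z' ?D" using Oo by blast
  have DW: "Inr -` ?D = {}"
  proof -
    { fix w assume w: "jW' w \<in> ?D"
      then have z: "jW' w \<in> topspace Z'" by blast
      have "(\<Psi> \<circ> \<Phi>) (jW' w) = jW' w" by simp
      then have "jW' w \<in> ?O" using z Vd by simp
      then have False using w by blast }
    then show ?thesis by blast
  qed
  have Sb: "Y.mbounded (Inl -` ?D)" using noW_bounded[OF Dc DW] .
  have "\<forall>y\<in>MY. y \<notin> Inl -` ?D \<longrightarrow> (jY y, jY (\<rho> (\<pi> y))) \<in> V \<and> (jY (\<rho> (\<pi> y)), jY y) \<in> V"
  proof (intro ballI impI)
    fix y assume y: "y \<in> MY" "y \<notin> Inl -` ?D"
    have "jY y \<in> topspace Z'" using y topZ' by simp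
    then have "jY y \<in> ?O" using y by blast
    then show "(jY y, jY (\<rho> (\<pi> y))) \<in> V \<and> (jY (\<rho> (\<pi> y)), jY y) \<in> V" by simp
  qed
  then show ?thesis using Sb by blast
qed

end

lemma ballpair2: "\<forall>(t,l)\<in>U. P t l \<Longrightarrow> (t,l) \<in> U \<Longrightarrow> P t l" by auto

definition clamp :: "real \<Rightarrow> real \<Rightarrow> real" where "clamp t a = max 0 (min t (a - 1))"

lemma clamp_in: "0 \<le> t \<Longrightarrow> clamp t a \<in> {0..t}"
  unfolding clamp_def by auto
lemma clamp_lt1: "a < 1 \<Longrightarrow> 0 \<le> t \<Longrightarrow> clamp t a = 0"
  unfolding clamp_def by auto
lemma clamp_gt: "t + 1 < a \<Longrightarrow> 0 \<le> t \<Longrightarrow> clamp t a = t"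
  unfolding clamp_def by auto
lemma clamp_mid: "\<not> a < 1 \<Longrightarrow> \<not> t + 1 < a \<Longrightarrow> clamp t a = a - 1"
  unfolding clamp_def by auto
lemma clamp_lip: "\<bar>clamp t a - clamp t b\<bar> \<le> \<bar>a - b\<bar>"
  unfolding clamp_def by (auto simp: max_def min_def abs_if)
lemma clamp_inv: "0 \<le> t \<Longrightarrow> a \<in> {0..t+2} \<Longrightarrow> b \<in> {0..t+2} \<Longrightarrow> \<bar>a - b\<bar> \<le> \<bar>clamp t a - clamp t b\<bar> + 2"
  unfolding clamp_def by (auto simp: max_def min_def abs_if)

lemma (in Metric_space) quad:
  "x \<in> M \<Longrightarrow> x' \<in> M \<Longrightarrow> y' \<in> M \<Longrightarrow> y \<in> M \<Longrightarrow> d x y \<le> d x x' + d x' y' + d y' y"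
  using triangle[of x x' y] triangle[of x' y' y] by linarith

lemma equi_embed:
  assumes "equicoarse d U" "(t,l) \<in> U" "0 \<le> t" "l ` {0..t} \<subseteq> M"
  shows "coarse_embedding_interval M d t l"
  unfolding coarse_embedding_interval_def
proof (intro conjI allI impI)
  fix r :: real assume r: "r > 0"
  obtain s where "s > 0" "\<forall>(t,l)\<in>U. \<forall>a\<in>{0..t}. \<forall>b\<in>{0..t}. \<bar>a - b\<bar> < r \<longrightarrow> d (l a) (l b) < s"
    using assms(1) r unfolding equicoarse_def by blast
  then show "\<exists>s>0. \<forall>a\<in>{0..t}. \<forall>b\<in>{0..t}. \<bar>a - b\<bar> < r \<longrightarrow> d (l a) (l b) < s"
    using ballpair2[of U "(\<lambda>t l. \<forall>a\<in>{0..t}. \<forall>b\<in>{0..t}. \<bar>a - b\<bar> < r \<longrightarrow> d (l a) (l b) < s)"] assms(2) by blast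
next
  fix r :: real assume r: "r > 0"
  obtain s where "s > 0" "\<forall>(t,l)\<in>U. \<forall>a\<in>{0..t}. \<forall>b\<in>{0..t}. d (l a) (l b) < r \<longrightarrow> \<bar>a - b\<bar> < s"
    using assms(1) r unfolding equicoarse_def by blast
  then show "\<exists>s>0. \<forall>a\<in>{0..t}. \<forall>b\<in>{0..t}. d (l a) (l b) < r \<longrightarrow> \<bar>a - b\<bar> < s"
    using ballpair2[of U "(\<lambda>t l. \<forall>a\<in>{0..t}. \<forall>b\<in>{0..t}. d (l a) (l b) < r \<longrightarrow> \<bar>a - b\<bar> < s)"] assms(2) by blast
qed (use assms in auto)

context KS begin

definition muf where "muf y1 y2 t l a = (if a < 1 then y1 else if t + 1 < a then y2 else \<rho> (l (a - 1)))"

lemma mu_close: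
  assumes y: "y1 \<in> MY" "y2 \<in> MY" and t: "0 \<le> t" and l: "l 0 = \<pi> y1" "l t = \<pi> y2" "l ` {0..t} \<subseteq> MX"
    and K: "\<forall>y\<in>MY. dY (\<rho> (\<pi> y)) y \<le> KY" "0 \<le> KY" and a: "a \<in> {0..t+2}"
  shows "muf y1 y2 t l a \<in> MY" "\<rho> (l (clamp t a)) \<in> MY" "dY (muf y1 y2 t l a) (\<rho> (l (clamp t a))) \<le> KY"
proof -
  have c: "clamp t a \<in> {0..t}" using clamp_in[OF t] .
  show r: "\<rho> (l (clamp t a)) \<in> MY" using rho_in c l(3) by blast
  have "muf y1 y2 t l a \<in> MY \<and> dY (muf y1 y2 t l a) (\<rho> (l (clamp t a))) \<le> KY"
  proof (cases "a < 1")
    case True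
    then have "muf y1 y2 t l a = y1" "clamp t a = 0" using clamp_lt1[OF _ t] unfolding muf_def by auto
    then show ?thesis using y K l Y.commute by auto
  next
    case False note F1 = this
    show ?thesis
    proof (cases "t + 1 < a")
      case True
      then have "muf y1 y2 t l a = y2" "clamp t a = t" using clamp_gt[OF _ t] F1 unfolding muf_def by auto
      then show ?thesis using y K l Y.commute by auto
    next
      case False
      then have "muf y1 y2 t l a = \<rho> (l (clamp t a))" using clamp_mid[OF F1] F1 unfolding muf_def by auto
      then show ?thesis using r K by simp
    qed
  qed
  then show "muf y1 y2 t l a \<in> MY" "dY (muf y1 y2 t l a) (\<rho> (l (clamp t a))) \<le> KY" by auto
qed

definition "UpsY \<Upsilon> = {(t + 2, muf y1 y2 t l) | y1 y2 t l. y1 \<in> MY \<and> y2 \<in> MY \<and> (t,l) \<in> \<Upsilon> \<and> coarse_arc MX dX (\<pi> y1) (\<pi> y2) (t,l)}"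

lemma arc_data:
  assumes "coarse_arc MX dX (\<pi> y1) (\<pi> y2) (t,l)"
  shows "0 \<le> t" "l 0 = \<pi> y1" "l t = \<pi> y2" "l ` {0..t} \<subseteq> MX"
  using assms unfolding coarse_arc_def coarse_embedding_interval_def by auto

lemma KY0: "\<exists>K. 0 \<le> K \<and> (\<forall>y\<in>MY. dY (\<rho> (\<pi> y)) y \<le> K)"
proof -
  obtain K where "\<forall>y\<in>MY. dY (\<rho> (\<pi> y)) y \<le> K" using KY_ex by blast
  then show ?thesis by (intro exI[of _ "max K 0"]) auto
qed

lemma KX0: "\<exists>K. 0 \<le> K \<and> (\<forall>x\<in>MX. dX (\<pi> (\<rho> x)) x \<le> K)"
proof -
  obtain K where "\<forall>x\<in>MX. dX (\<pi> (\<rho> x)) x \<le> K" using KX_ex by blast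
  then show ?thesis by (intro exI[of _ "max K 0"]) auto
qed

lemma UpsY_equi:
  assumes eq: "equicoarse dX \<Upsilon>"
  shows "equicoarse dY (UpsY \<Upsilon>)"
proof -
  obtain KY where KY: "0 \<le> KY" "\<forall>y\<in>MY. dY (\<rho> (\<pi> y)) y \<le> KY" using KY0 by blast
  obtain KX where KX: "0 \<le> KX" "\<forall>x\<in>MX. dX (\<pi> (\<rho> x)) x \<le> KX" using KX0 by blast
  have part1: "\<exists>s>0. \<forall>(t',\<mu>)\<in>UpsY \<Upsilon>. \<forall>a\<in>{0..t'}. \<forall>b\<in>{0..t'}. \<bar>a - b\<bar> < r \<longrightarrow> dY (\<mu> a) (\<mu> b) < s"
    if r: "r > 0" for r
  proof -
    obtain s1 where s1: "s1 > 0" "\<forall>(t,l)\<in>\<Upsilon>. \<forall>a\<in>{0..t}. \<forall>b\<in>{0..t}. \<bar>a - b\<bar> < r \<longrightarrow> dX (l a) (l b) < s1"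
      using eq r unfolding equicoarse_def by blast
    obtain s2 where s2: "\<forall>x1\<in>MX. \<forall>x2\<in>MX. dX x1 x2 \<le> s1 \<longrightarrow> dY (\<rho> x1) (\<rho> x2) \<le> s2" using born_rho by blast
    define s where "s = \<bar>s2\<bar> + 2 * KY + 1"
    have spos: "s > 0" unfolding s_def using KY by simp
    have key: "dY (muf y1 y2 t l a) (muf y1 y2 t l b) < s"
      if h: "y1 \<in> MY" "y2 \<in> MY" "(t,l) \<in> \<Upsilon>" "coarse_arc MX dX (\<pi> y1) (\<pi> y2) (t,l)"
        "a \<in> {0..t+2}" "b \<in> {0..t+2}" "\<bar>a - b\<bar> < r" for y1 y2 t l a b
    proof -
      note ad = arc_data[OF h(4)]
      let ?c = "clamp t a" and ?c' = "clamp t b"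
      have cc: "?c \<in> {0..t}" "?c' \<in> {0..t}" using clamp_in[OF ad(1)] by auto
      have "\<bar>?c - ?c'\<bar> < r" using clamp_lip[of t a b] h(7) by linarith
      then have "dX (l ?c) (l ?c') < s1" using ballpair2[OF s1(2) h(3)] cc by blast
      moreover have lM: "l ?c \<in> MX" "l ?c' \<in> MX" using cc ad(4) by auto
      ultimately have d2: "dY (\<rho> (l ?c)) (\<rho> (l ?c')) \<le> s2" using s2 by auto
      note m1 = mu_close[OF h(1,2) ad KY(2) KY(1) h(5)]
      note m2 = mu_close[OF h(1,2) ad KY(2) KY(1) h(6)]
      have "dY (muf y1 y2 t l a) (muf y1 y2 t l b) \<le> dY (muf y1 y2 t l a) (\<rho> (l ?c)) + dY (\<rho> (l ?c)) (\<rho> (l ?c')) + dY (\<rho> (l ?c')) (muf y1 y2 t l b)"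
        using Y.quad m1(1,2) m2(1,2) by blast
      also have "\<dots> \<le> KY + s2 + KY" using m1(3) m2(3) d2 Y.commute[of "\<rho> (l ?c')" "muf y1 y2 t l b"] by linarith
      finally show ?thesis unfolding s_def by linarith
    qed
    show ?thesis
      apply (rule exI[of _ s])
      using spos key unfolding UpsY_def by auto
  qed
  have part2: "\<exists>s>0. \<forall>(t',\<mu>)\<in>UpsY \<Upsilon>. \<forall>a\<in>{0..t'}. \<forall>b\<in>{0..t'}. dY (\<mu> a) (\<mu> b) < r \<longrightarrow> \<bar>a - b\<bar> < s"
    if r: "r > 0" for r
  proof -
    obtain s3 where s3: "\<forall>y1\<in>MY. \<forall>y2\<in>MY. dY y1 y2 \<le> r + 2 * KY \<longrightarrow> dX (\<pi> y1) (\<pi> y2) \<le> s3"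
      using born_pi by blast
    define r2 where "r2 = \<bar>s3\<bar> + 2 * KX + 1"
    have r2pos: "r2 > 0" unfolding r2_def using KX by simp
    obtain s4 where s4: "s4 > 0" "\<forall>(t,l)\<in>\<Upsilon>. \<forall>a\<in>{0..t}. \<forall>b\<in>{0..t}. dX (l a) (l b) < r2 \<longrightarrow> \<bar>a - b\<bar> < s4"
      using eq r2pos unfolding equicoarse_def by blast
    have key: "\<bar>a - b\<bar> < s4 + 2"
      if h: "y1 \<in> MY" "y2 \<in> MY" "(t,l) \<in> \<Upsilon>" "coarse_arc MX dX (\<pi> y1) (\<pi> y2) (t,l)"
        "a \<in> {0..t+2}" "b \<in> {0..t+2}" "dY (muf y1 y2 t l a) (muf y1 y2 t l b) < r" for y1 y2 t l a b
    proof -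
      note ad = arc_data[OF h(4)]
      let ?c = "clamp t a" and ?c' = "clamp t b"
      have cc: "?c \<in> {0..t}" "?c' \<in> {0..t}" using clamp_in[OF ad(1)] by auto
      have lM: "l ?c \<in> MX" "l ?c' \<in> MX" using cc ad(4) by auto
      note m1 = mu_close[OF h(1,2) ad KY(2) KY(1) h(5)]
      note m2 = mu_close[OF h(1,2) ad KY(2) KY(1) h(6)]
      have "dY (\<rho> (l ?c)) (\<rho> (l ?c')) \<le> dY (\<rho> (l ?c)) (muf y1 y2 t l a) + dY (muf y1 y2 t l a) (muf y1 y2 t l b) + dY (muf y1 y2 t l b) (\<rho> (l ?c'))"
        using Y.quad m1(1,2) m2(1,2) by blast
      also have "\<dots> \<le> r + 2 * KY" using m1(3) m2(3) h(7) Y.commute[of "\<rho> (l ?c)" "muf y1 y2 t l a"] by linarith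
      finally have "dX (\<pi> (\<rho> (l ?c))) (\<pi> (\<rho> (l ?c'))) \<le> s3" using s3 m1(2) m2(2) by blast
      moreover have "dX (l ?c) (l ?c') \<le> dX (l ?c) (\<pi> (\<rho> (l ?c))) + dX (\<pi> (\<rho> (l ?c))) (\<pi> (\<rho> (l ?c'))) + dX (\<pi> (\<rho> (l ?c'))) (l ?c')"
        using X.quad lM pi_in rho_in by blast
      moreover have "dX (l ?c) (\<pi> (\<rho> (l ?c))) \<le> KX" using KX(2) lM X.commute by metis
      moreover have "dX (\<pi> (\<rho> (l ?c'))) (l ?c') \<le> KX" using KX(2) lM by blast
      ultimately have "dX (l ?c) (l ?c') < r2" unfolding r2_def by linarith
      then have "\<bar>?c - ?c'\<bar> < s4" using ballpair2[OF s4(2) h(3)] cc by blast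
      then show ?thesis using clamp_inv[OF ad(1) h(5,6)] by linarith
    qed
    show ?thesis
      apply (rule exI[of _ "s4 + 2"])
      using s4(1) key unfolding UpsY_def by auto
  qed
  show ?thesis unfolding equicoarse_def using part1 part2 by blast
qed

end

context KS begin

lemma karY: "coarse_karlsson MY dY W fs"
  unfolding coarse_karlsson_def Let_def
proof (intro conjI compZ')
  obtain \<Upsilon> where eq: "equicoarse dX \<Upsilon>" and arcs: "\<forall>x\<in>MX. \<forall>y\<in>MX. \<exists>ar\<in>\<Upsilon>. coarse_arc MX dX x y ar"
    and sm: "\<forall>u\<in>compact_uniformity Z.
            \<exists>S. S \<subseteq> MX \<and> X.mbounded S \<and>
              (\<forall>(t,l)\<in>\<Upsilon>. l ` {0..t} \<inter> S = {} \<longrightarrow> small_for u (Inl ` l ` {0..t}))"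
    using exUps by blast
  have eqY: "equicoarse dY (UpsY \<Upsilon>)" using UpsY_equi[OF eq] .
  have isarc: "coarse_arc MY dY y1 y2 (t + 2, muf y1 y2 t l)"
    if h: "y1 \<in> MY" "y2 \<in> MY" "(t,l) \<in> \<Upsilon>" "coarse_arc MX dX (\<pi> y1) (\<pi> y2) (t,l)" for y1 y2 t l
  proof -
    note ad = arc_data[OF h(4)]
    obtain KY where KY: "0 \<le> KY" "\<forall>y\<in>MY. dY (\<rho> (\<pi> y)) y \<le> KY" using KY0 by blast
    have mem: "(t + 2, muf y1 y2 t l) \<in> UpsY \<Upsilon>" unfolding UpsY_def using h by blast
    have "muf y1 y2 t l ` {0..t+2} \<subseteq> MY" using mu_close(1)[OF h(1,2) ad KY(2) KY(1)] by blast
    then have "coarse_embedding_interval MY dY (t + 2) (muf y1 y2 t l)"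
      using equi_embed[OF eqY mem] ad(1) by simp
    moreover have "muf y1 y2 t l 0 = y1" unfolding muf_def by simp
    moreover have "muf y1 y2 t l (t + 2) = y2" unfolding muf_def using ad(1) by simp
    ultimately show ?thesis unfolding coarse_arc_def by simp
  qed
  show "\<exists>\<Upsilon>'. equicoarse dY \<Upsilon>' \<and>
         (\<forall>x\<in>MY. \<forall>y\<in>MY. \<exists>ar\<in>\<Upsilon>'. coarse_arc MY dY x y ar) \<and>
         (\<forall>ar\<in>\<Upsilon>'. \<exists>x y. coarse_arc MY dY x y ar) \<and>
         (\<forall>u\<in>compact_uniformity Z'.
            \<exists>S. S \<subseteq> MY \<and> Y.mbounded S \<and>
              (\<forall>(t,l)\<in>\<Upsilon>'. l ` {0..t} \<inter> S = {} \<longrightarrow> small_for u (Inl ` l ` {0..t})))"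
  proof (intro exI[of _ "UpsY \<Upsilon>"] conjI eqY ballI)
    fix x y assume xy: "x \<in> MY" "y \<in> MY"
    then obtain ar where ar: "ar \<in> \<Upsilon>" "coarse_arc MX dX (\<pi> x) (\<pi> y) ar" using arcs pi_in by blast
    obtain t l where tl: "ar = (t,l)" by (cases ar)
    have "(t + 2, muf x y t l) \<in> UpsY \<Upsilon>" unfolding UpsY_def using xy ar tl by blast
    moreover have "coarse_arc MY dY x y (t + 2, muf x y t l)" using isarc xy ar tl by blast
    ultimately show "\<exists>ar\<in>UpsY \<Upsilon>. coarse_arc MY dY x y ar" by blast
  next
    fix ar assume "ar \<in> UpsY \<Upsilon>"
    then obtain y1 y2 t l where h: "ar = (t + 2, muf y1 y2 t l)" "y1 \<in> MY" "y2 \<in> MY" "(t,l) \<in> \<Upsilon>"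
      "coarse_arc MX dX (\<pi> y1) (\<pi> y2) (t,l)" unfolding UpsY_def by blast
    then show "\<exists>x y. coarse_arc MY dY x y ar" using isarc by blast
  next
    fix u assume u: "u \<in> compact_uniformity Z'"
    then obtain U0 where U0: "openin (prod_topology Z' Z') U0" "{(z,z) | z. z \<in> topspace Z'} \<subseteq> U0" "U0 \<subseteq> u"
      unfolding compact_uniformity_def by blast
    have U0d: "\<forall>z\<in>topspace Z'. (z,z) \<in> U0" using U0(2) by blast
    obtain V1 where V1: "openin (prod_topology Z' Z') V1" "\<forall>z\<in>topspace Z'. (z,z) \<in> V1"
      "\<forall>a b c. (a,b) \<in> V1 \<longrightarrow> (b,c) \<in> V1 \<longrightarrow> (a,c) \<in> U0"
      using comp_uniform[OF cZ' hZ' U0(1) U0d] by blast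
    obtain V where V: "openin (prod_topology Z' Z') V" "\<forall>z\<in>topspace Z'. (z,z) \<in> V"
      "\<forall>a b c. (a,b) \<in> V \<longrightarrow> (b,c) \<in> V \<longrightarrow> (a,c) \<in> V1"
      using comp_uniform[OF cZ' hZ' V1(1) V1(2)] by blast
    have Vsub: "V \<subseteq> topspace Z' \<times> topspace Z'" using openin_subset[OF V(1)] by (simp add: topspace_prod_topology)
    have V3: "(a,d) \<in> U0" if "(a,b) \<in> V" "(b,c) \<in> V" "(c,d) \<in> V" for a b c d
    proof -
      have "(a,c) \<in> V1" using V(3) that by blast
      moreover have "d \<in> topspace Z'" using Vsub that(3) by blast
      then have "(c,d) \<in> V1" using V(3) V(2) that(3) by blast
      ultimately show ?thesis using V1(3) by blast
    qed
    obtain SG where SG: "Y.mbounded SG" "\<forall>y\<in>MY. y \<notin> SG \<longrightarrow> (jY y, jY (\<rho> (\<pi> y))) \<in> V \<and> (jY (\<rho> (\<pi> y)), jY y) \<in> V"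
      using G_close[OF V(1) V(2)] by blast
    let ?Q0 = "{p \<in> topspace (prod_topology Z Z). (\<Psi> (fst p), \<Psi> (snd p)) \<in> V}"
    have pc: "continuous_map (prod_topology Z Z) (prod_topology Z' Z') (\<lambda>p. (\<Psi> (fst p), \<Psi> (snd p)))"
      by (intro continuous_map_pairedI continuous_map_compose[OF continuous_map_fst Psi_cont, unfolded o_def]
          continuous_map_compose[OF continuous_map_snd Psi_cont, unfolded o_def])
    have Q0o: "openin (prod_topology Z Z) ?Q0" using openin_continuous_map_preimage[OF pc V(1)] .
    have Psi_in: "\<Psi> z \<in> topspace Z'" if "z \<in> topspace Z" for z
      using Psi_cont that unfolding continuous_map_def by blast
    have "?Q0 \<in> compact_uniformity Z"
      unfolding compact_uniformity_def
    proof (intro CollectI conjI exI)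
      show "?Q0 \<subseteq> topspace Z \<times> topspace Z" by (auto simp: topspace_prod_topology)
      show "openin (prod_topology Z Z) ?Q0" by (rule Q0o)
      show "{(z, z) |z. z \<in> topspace Z} \<subseteq> ?Q0" using Psi_in V(2) by (auto simp: topspace_prod_topology)
    qed auto
    then obtain SX where SX: "SX \<subseteq> MX" "X.mbounded SX"
      "\<forall>(t,l)\<in>\<Upsilon>. l ` {0..t} \<inter> SX = {} \<longrightarrow> small_for ?Q0 (jX ` l ` {0..t})"
      using sm by blast
    let ?S = "SG \<union> \<rho> ` SX"
    have Sb: "Y.mbounded ?S" using SG(1) rho_bounded[OF SX(2)] Y.mbounded_Un by blast
    have SM: "?S \<subseteq> MY" using Y.mbounded_subset_mspace[OF Sb] .
    have key: "small_for u (jY ` muf y1 y2 t l ` {0..t+2})"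
      if h: "y1 \<in> MY" "y2 \<in> MY" "(t,l) \<in> \<Upsilon>" "coarse_arc MX dX (\<pi> y1) (\<pi> y2) (t,l)"
        "muf y1 y2 t l ` {0..t+2} \<inter> ?S = {}" for y1 y2 t l
    proof -
      note ad = arc_data[OF h(4)]
      obtain KY where KY: "0 \<le> KY" "\<forall>y\<in>MY. dY (\<rho> (\<pi> y)) y \<le> KY" using KY0 by blast
      let ?mu = "muf y1 y2 t l"
      have mu0: "?mu 0 = y1" unfolding muf_def by simp
      have mut: "?mu (t + 2) = y2" unfolding muf_def using ad(1) by simp
      have y1S: "y1 \<notin> SG" using h(5) mu0 ad(1) by force
      have "t + 2 \<in> {0..t+2}" using ad(1) by simp
      then have "?mu (t + 2) \<in> ?mu ` {0..t+2}" by (rule imageI)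
      then have "y2 \<in> ?mu ` {0..t+2}" using mut by simp
      then have y2S: "y2 \<notin> SG" using h(5) by blast
      have lS: "l ` {0..t} \<inter> SX = {}"
      proof (rule ccontr)
        assume "l ` {0..t} \<inter> SX \<noteq> {}"
        then obtain e where e: "e \<in> {0..t}" "l e \<in> SX" by blast
        have "?mu (e + 1) = \<rho> (l e)" unfolding muf_def using e(1) by simp
        moreover have "e + 1 \<in> {0..t+2}" using e(1) by simp
        ultimately have "\<rho> (l e) \<in> ?mu ` {0..t+2}" by (metis imageI)
        moreover have "\<rho> (l e) \<in> ?S" using e(2) by blast
        ultimately show False using h(5) by blast
      qed
      have smX: "small_for ?Q0 (jX ` l ` {0..t})" using ballpair2[OF SX(3) h(3)] lS by blast
      have mid: "(jY (\<rho> (l c)), jY (\<rho> (l c'))) \<in> V" if "c \<in> {0..t}" "c' \<in> {0..t}" for c c'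
      proof -
        have "(jX (l c), jX (l c')) \<in> ?Q0" using smX that unfolding small_for_def by blast
        then show ?thesis by simp
      qed
      have ends: "(jY (?mu a), jY (\<rho> (l (clamp t a)))) \<in> V \<and> (jY (\<rho> (l (clamp t a))), jY (?mu a)) \<in> V"
        if a: "a \<in> {0..t+2}" for a
      proof (cases "a < 1")
        case True
        then have "?mu a = y1" "clamp t a = 0" using clamp_lt1[OF _ ad(1)] unfolding muf_def by auto
        then show ?thesis using SG(2) h(1) y1S ad(2) by simp
      next
        case False note F1 = this
        show ?thesis
        proof (cases "t + 1 < a")
          case True
          then have "?mu a = y2" "clamp t a = t" using clamp_gt[OF _ ad(1)] F1 unfolding muf_def by auto
          then show ?thesis using SG(2) h(2) y2S ad(3) by simp
        next
          case False
          then have e: "?mu a = \<rho> (l (clamp t a))" using clamp_mid[OF F1] F1 unfolding muf_def by auto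
          have "\<rho> (l (clamp t a)) \<in> MY" using mu_close(2)[OF h(1,2) ad KY(2) KY(1) a] .
          then have "jY (\<rho> (l (clamp t a))) \<in> topspace Z'" using topZ' by simp
          then show ?thesis using e V(2) by simp
        qed
      qed
      show ?thesis unfolding small_for_def
      proof
        fix p assume "p \<in> jY ` ?mu ` {0..t+2} \<times> jY ` ?mu ` {0..t+2}"
        then obtain a b where ab: "a \<in> {0..t+2}" "b \<in> {0..t+2}" "p = (jY (?mu a), jY (?mu b))" by blast
        have c: "clamp t a \<in> {0..t}" "clamp t b \<in> {0..t}" using clamp_in[OF ad(1)] by auto
        have "(jY (?mu a), jY (?mu b)) \<in> U0"
          using V3[OF conjunct1[OF ends[OF ab(1)]] mid[OF c] conjunct2[OF ends[OF ab(2)]]] .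
        then show "p \<in> u" using ab(3) U0(3) by blast
      qed
    qed
    have "\<forall>(t',\<mu>)\<in>UpsY \<Upsilon>. \<mu> ` {0..t'} \<inter> ?S = {} \<longrightarrow> small_for u (Inl ` \<mu> ` {0..t'})"
    proof (clarify)
      fix t' \<mu> assume m: "(t', \<mu>) \<in> UpsY \<Upsilon>" and d: "\<mu> ` {0..t'} \<inter> ?S = {}"
      then obtain y1 y2 t l where h: "t' = t + 2" "\<mu> = muf y1 y2 t l" "y1 \<in> MY" "y2 \<in> MY" "(t,l) \<in> \<Upsilon>"
        "coarse_arc MX dX (\<pi> y1) (\<pi> y2) (t,l)" unfolding UpsY_def by blast
      show "small_for u (Inl ` \<mu> ` {0..t'})" using key[OF h(3-6)] d h(1,2) by simp
    qed
    then show "\<exists>S. S \<subseteq> MY \<and> Y.mbounded S \<and>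
              (\<forall>(t,l)\<in>UpsY \<Upsilon>. l ` {0..t} \<inter> S = {} \<longrightarrow> small_for u (Inl ` l ` {0..t}))"
      using SM Sb by blast
  qed
qed

end

theorem mainTheorem17:
  fixes MX :: "'x set" and dX :: "'x \<Rightarrow> 'x \<Rightarrow> real"
    and MY :: "'y set" and dY :: "'y \<Rightarrow> 'y \<Rightarrow> real"
    and W :: "'w topology" and f :: "'x set \<Rightarrow> 'w set"
    and \<pi> :: "'y \<Rightarrow> 'x" and \<rho> :: "'x \<Rightarrow> 'y"
  assumes "proper_metric_space MX dX" and "proper_metric_space MY dY"
    and "continuous_map (Metric_space.mtopology MY dY) (Metric_space.mtopology MX dX) \<pi>"
    and "continuous_map (Metric_space.mtopology MX dX) (Metric_space.mtopology MY dY) \<rho>"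
    and "coarse_map MY (bounded_coarse MY dY) MX (bounded_coarse MX dX) \<pi>"
    and "coarse_quasi_inverse MY (bounded_coarse MY dY) MX (bounded_coarse MX dX) \<pi> \<rho>"
    and "coarse_karlsson MX dX W f"
  shows "coarse_karlsson MY dY W
           (pull_admissible (Metric_space.mtopology MX dX) W f \<pi>)"
proof -
  have "KS MX dX MY dY W f \<pi> \<rho>"
    using assms unfolding proper_metric_space_def by (intro KS.intro KS_axioms.intro) auto
  then show ?thesis using KS.karY by blast
qed


end
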